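(* A gentle quiver $(\Delta,R)$ is of tree type (i.e. $|\Delta_0|=|\Delta_1|+1$) if and only if $f_{(\Delta,R)}=[p+2,\,p]$ for some $p\in\mathbb N$.
   Context: A quiver $\Delta$ has finite vertex set $\Delta_0$, arrow set $\Delta_1$, maps $s,t$. A path of length $n\ge1$ is $(\alpha_1,\dots,\alpha_n)$ with $s\alpha_i=t\alpha_{i+1}$. A gentle quiver is $(\Delta,R)$ with $\Delta$ connected, $R$ a set of paths of length 2, such that: (1) each vertex is start of at most two arrows and end of at most two arrows; (2) for each arrow $\alpha$ at most one $\beta$ with $s\beta=t\alpha$, $(\beta,\alpha)\notin R$ and at most one $\gamma$ with $t\gamma=s\alpha$, $(\alpha,\gamma)\notin R$; (3) for each $\alpha$ at most one $\beta$ with $(\beta,\alpha)\in R$ and at most one $\gamma$ with $(\alpha,\gamma)\in R$; (4) for some $n$ every path of length $n$ has a subpath in $R$. Invariant $f_{(\Delta,R)}:\mathbb N^2\to\mathbb N$: choose $\sigma,\tau:\Delta_1\to\{\pm1\}$ with distinct arrows of same start having opposite $\sigma$, distinct arrows of same end opposite $\tau$, and for $s\alpha=t\beta$: $(\alpha,\beta)\in R$ iff $\sigma\alpha=\tau\beta$; $\sigma\omega=\sigma\alpha_n,\tau\omega=\tau\alpha_1$. Permitted paths: no consecutive pair in $R$, plus trivial $1_{x,\varepsilon}$ ($s=t=x$, $\sigma=\varepsilon,\tau=-\varepsilon$); maximal if no arrow $\alpha$ with $s\alpha=t\omega,\sigma\alpha=-\tau\omega$ and no $\beta$ with $t\beta=s\omega,\tau\beta=-\sigma\omega$;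 set $\mathcal M$. Antipaths: all consecutive pairs in $R$, plus trivial $1'_{x,\varepsilon}$ ($\sigma=\tau=\varepsilon$); maximal if no $\alpha$ with $s\alpha=t\omega,\sigma\alpha=\tau\omega$ and no $\beta$ with $t\beta=s\omega,\tau\beta=\sigma\omega$; set $\mathcal N$. $\phi:\mathcal M\to\mathcal N$, $\omega\mapsto$ unique $\omega'$ with $t\omega'=t\omega,\tau\omega'=-\tau\omega$; $\psi:\mathcal N\to\mathcal M$, $\omega\mapsto$ unique $\omega'$ with $s\omega'=s\omega,\sigma\omega'=-\sigma\omega$; $\Phi=\phi\psi$; $\Phi$-orbit: $p=|\mathcal O|$, $q=$ total length. $\mathcal C$: arrows $\alpha$ with $(\alpha)$ not a subpath of a maximal antipath; $\Psi(\alpha)=$ unique $\beta\in\mathcal C$ with $t\beta=s\alpha,\tau\beta=\sigma\alpha$; $\Psi$-orbit: $p=0$, $q=|\mathcal O|$. $f(p,q)=$ number of orbits with these values. $[p,q]$ is the characteristic function of $\{(p,q)\}$. *)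

theory Defs
  imports Main
begin

text \<open>A path (alpha_1,...,alpha_n) is the nonempty list [alpha_1,...,alpha_n] with
s alpha_i = t alpha_(i+1); its start is s alpha_n and its end is t alpha_1.\<close>

datatype ('v,'a) qpath = Triv 'v int | Arr "'a list"

fun psrc :: "('a \<Rightarrow> 'v) \<Rightarrow> ('v,'a) qpath \<Rightarrow> 'v" where
  "psrc s (Triv x e) = x" | "psrc s (Arr l) = s (last l)"

fun ptgt :: "('a \<Rightarrow> 'v) \<Rightarrow> ('v,'a) qpath \<Rightarrow> 'v" where
  "ptgt t (Triv x e) = x" | "ptgt t (Arr l) = t (hd l)"

fun plen :: "('v,'a) qpath \<Rightarrow> nat" where
  "plen (Triv x e) = 0" | "plen (Arr l) = length l"

fun sig_perm :: "('a \<Rightarrow> int) \<Rightarrow> ('v,'a) qpath \<Rightarrow> int" where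
  "sig_perm \<sigma> (Triv x e) = e" | "sig_perm \<sigma> (Arr l) = \<sigma> (last l)"
fun tau_perm :: "('a \<Rightarrow> int) \<Rightarrow> ('v,'a) qpath \<Rightarrow> int" where
  "tau_perm \<tau> (Triv x e) = - e" | "tau_perm \<tau> (Arr l) = \<tau> (hd l)"

fun sig_anti :: "('a \<Rightarrow> int) \<Rightarrow> ('v,'a) qpath \<Rightarrow> int" where
  "sig_anti \<sigma> (Triv x e) = e" | "sig_anti \<sigma> (Arr l) = \<sigma> (last l)"
fun tau_anti :: "('a \<Rightarrow> int) \<Rightarrow> ('v,'a) qpath \<Rightarrow> int" where
  "tau_anti \<tau> (Triv x e) = e" | "tau_anti \<tau> (Arr l) = \<tau> (hd l)"

definition is_qpath :: "'a set \<Rightarrow> ('a \<Rightarrow> 'v) \<Rightarrow> ('a \<Rightarrow> 'v) \<Rightarrow> 'a list \<Rightarrow> bool" where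
  "is_qpath A s t l \<longleftrightarrow> l \<noteq> [] \<and> set l \<subseteq> A \<and>
     (\<forall>i. Suc i < length l \<longrightarrow> s (l ! i) = t (l ! Suc i))"

definition gentle :: "'v set \<Rightarrow> 'a set \<Rightarrow> ('a \<Rightarrow> 'v) \<Rightarrow> ('a \<Rightarrow> 'v) \<Rightarrow> ('a \<times> 'a) set \<Rightarrow> bool" where
  "gentle V A s t R \<longleftrightarrow>
     finite V \<and> finite A \<and> (\<forall>a\<in>A. s a \<in> V \<and> t a \<in> V) \<and>
     (\<forall>(a,b)\<in>R. a \<in> A \<and> b \<in> A \<and> s a = t b) \<and>
     V \<noteq> {} \<and>
     (\<forall>x\<in>V. \<forall>y\<in>V. (x,y) \<in> ({(s a, t a) | a. a \<in> A} \<union> {(t a, s a) | a. a \<in> A})\<^sup>*) \<and>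
     (\<forall>x\<in>V. card {a\<in>A. s a = x} \<le> 2 \<and> card {a\<in>A. t a = x} \<le> 2) \<and>
     (\<forall>a\<in>A. card {b\<in>A. s b = t a \<and> (b,a) \<notin> R} \<le> 1 \<and>
             card {c\<in>A. t c = s a \<and> (a,c) \<notin> R} \<le> 1) \<and>
     (\<forall>a\<in>A. card {b. (b,a) \<in> R} \<le> 1 \<and> card {c. (a,c) \<in> R} \<le> 1) \<and>
     (\<exists>n\<ge>1. \<forall>l. is_qpath A s t l \<and> length l = n \<longrightarrow>
                 (\<exists>i. Suc i < n \<and> (l ! i, l ! Suc i) \<in> R))"

definition valid_signs :: "'a set \<Rightarrow> ('a \<Rightarrow> 'v) \<Rightarrow> ('a \<Rightarrow> 'v) \<Rightarrow> ('a \<times> 'a) set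
     \<Rightarrow> ('a \<Rightarrow> int) \<Rightarrow> ('a \<Rightarrow> int) \<Rightarrow> bool" where
  "valid_signs A s t R \<sigma> \<tau> \<longleftrightarrow>
     (\<forall>a\<in>A. \<sigma> a \<in> {1, -1} \<and> \<tau> a \<in> {1, -1}) \<and>
     (\<forall>a\<in>A. \<forall>b\<in>A. a \<noteq> b \<and> s a = s b \<longrightarrow> \<sigma> a = - \<sigma> b) \<and>
     (\<forall>a\<in>A. \<forall>b\<in>A. a \<noteq> b \<and> t a = t b \<longrightarrow> \<tau> a = - \<tau> b) \<and>
     (\<forall>a\<in>A. \<forall>b\<in>A. s a = t b \<longrightarrow> ((a,b) \<in> R \<longleftrightarrow> \<sigma> a = \<tau> b))"

definition permitted :: "'v set \<Rightarrow> 'a set \<Rightarrow> ('a \<Rightarrow> 'v) \<Rightarrow> ('a \<Rightarrow> 'v) \<Rightarrow> ('a \<times> 'a) set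
     \<Rightarrow> ('v,'a) qpath \<Rightarrow> bool" where
  "permitted V A s t R w \<longleftrightarrow> (case w of
      Triv x e \<Rightarrow> x \<in> V \<and> e \<in> {1, -1}
    | Arr l \<Rightarrow> is_qpath A s t l \<and> (\<forall>i. Suc i < length l \<longrightarrow> (l ! i, l ! Suc i) \<notin> R))"

definition antipath :: "'v set \<Rightarrow> 'a set \<Rightarrow> ('a \<Rightarrow> 'v) \<Rightarrow> ('a \<Rightarrow> 'v) \<Rightarrow> ('a \<times> 'a) set
     \<Rightarrow> ('v,'a) qpath \<Rightarrow> bool" where
  "antipath V A s t R w \<longleftrightarrow> (case w of
      Triv x e \<Rightarrow> x \<in> V \<and> e \<in> {1, -1}
    | Arr l \<Rightarrow> is_qpath A s t l \<and> (\<forall>i. Suc i < length l \<longrightarrow> (l ! i, l ! Suc i) \<in> R))"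

definition maxperm where
  "maxperm V A s t R \<sigma> \<tau> = {w. permitted V A s t R w \<and>
     \<not> (\<exists>a\<in>A. s a = ptgt t w \<and> \<sigma> a = - tau_perm \<tau> w) \<and>
     \<not> (\<exists>b\<in>A. t b = psrc s w \<and> \<tau> b = - sig_perm \<sigma> w)}"

definition maxanti where
  "maxanti V A s t R \<sigma> \<tau> = {w. antipath V A s t R w \<and>
     \<not> (\<exists>a\<in>A. s a = ptgt t w \<and> \<sigma> a = tau_anti \<tau> w) \<and>
     \<not> (\<exists>b\<in>A. t b = psrc s w \<and> \<tau> b = sig_anti \<sigma> w)}"

definition ag_phi where
  "ag_phi V A s t R \<sigma> \<tau> w = (THE w'. w' \<in> maxanti V A s t R \<sigma> \<tau> \<and>
      ptgt t w' = ptgt t w \<and> tau_anti \<tau> w' = - tau_perm \<tau> w)"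

definition ag_psi where
  "ag_psi V A s t R \<sigma> \<tau> w = (THE w'. w' \<in> maxperm V A s t R \<sigma> \<tau> \<and>
      psrc s w' = psrc s w \<and> sig_perm \<sigma> w' = - sig_anti \<sigma> w)"

definition ag_Phi where
  "ag_Phi V A s t R \<sigma> \<tau> = ag_phi V A s t R \<sigma> \<tau> \<circ> ag_psi V A s t R \<sigma> \<tau>"

definition ag_C where
  "ag_C V A s t R \<sigma> \<tau> = {a\<in>A. \<forall>w\<in>maxanti V A s t R \<sigma> \<tau>.
      (case w of Triv x e \<Rightarrow> True | Arr l \<Rightarrow> a \<notin> set l)}"

definition ag_Psi where
  "ag_Psi V A s t R \<sigma> \<tau> a = (THE b. b \<in> ag_C V A s t R \<sigma> \<tau> \<and> t b = s a \<and> \<tau> b = \<sigma> a)"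

definition orbits :: "('b \<Rightarrow> 'b) \<Rightarrow> 'b set \<Rightarrow> 'b set set" where
  "orbits f X = {{(f ^^ n) x | n. True} | x. x \<in> X}"

definition AG_with where
  "AG_with V A s t R \<sigma> \<tau> p q =
     card {Ob \<in> orbits (ag_Phi V A s t R \<sigma> \<tau>) (maxanti V A s t R \<sigma> \<tau>).
             card Ob = p \<and> (\<Sum>w\<in>Ob. plen w) = q}
   + card {Ob \<in> orbits (ag_Psi V A s t R \<sigma> \<tau>) (ag_C V A s t R \<sigma> \<tau>).
             p = 0 \<and> card Ob = q}"

definition AG_invariant :: "'v set \<Rightarrow> 'a set \<Rightarrow> ('a \<Rightarrow> 'v) \<Rightarrow> ('a \<Rightarrow> 'v) \<Rightarrow> ('a \<times> 'a) set
     \<Rightarrow> nat \<Rightarrow> nat \<Rightarrow> nat" where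
  "AG_invariant V A s t R =
     (let st = (SOME st. valid_signs A s t R (fst st) (snd st))
      in AG_with V A s t R (fst st) (snd st))"

definition char_fun :: "nat \<Rightarrow> nat \<Rightarrow> nat \<Rightarrow> nat \<Rightarrow> nat" where
  "char_fun a b = (\<lambda>p q. if p = a \<and> q = b then 1 else 0)"

end

theory Submission
  imports Defs
begin


lemma funpow_in: "f ` Z \<subseteq> Z \<Longrightarrow> c \<in> Z \<Longrightarrow> (f ^^ n) c \<in> Z"
  by (induction n) auto

lemma perm_periodic:
  assumes fin: "finite Z" and inj: "inj_on f Z" and img: "f ` Z \<subseteq> Z" and c: "c \<in> Z"
  shows "\<exists>k>0. (f ^^ k) c = c"
proof -
  have "\<not> inj_on (\<lambda>n. (f ^^ n) c) {0..card Z}"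
  proof
    assume "inj_on (\<lambda>n. (f ^^ n) c) {0..card Z}"
    moreover have "(\<lambda>n. (f ^^ n) c) ` {0..card Z} \<subseteq> Z" using funpow_in[OF img c] by auto
    ultimately have "card {0..card Z} \<le> card Z" using card_inj_on_le fin by blast
    then show False by simp
  qed
  then obtain i j where ij: "i \<noteq> j" "(f ^^ i) c = (f ^^ j) c" unfolding inj_on_def by auto
  have canc: "\<And>i j. i < j \<Longrightarrow> (f ^^ i) c = (f ^^ j) c \<Longrightarrow> (f ^^ (j - i)) c = c"
  proof -
    fix i j :: nat assume "i < j" "(f ^^ i) c = (f ^^ j) c"
    then show "(f ^^ (j - i)) c = c"
    proof (induction i arbitrary: j)
      case 0 then show ?case by simp
    next
      case (Suc i)
      then obtain j' where j': "j = Suc j'" by (cases j) auto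
      have "f ((f ^^ i) c) = f ((f ^^ j') c)" using Suc.prems j' by simp
      then have "(f ^^ i) c = (f ^^ j') c"
        using inj funpow_in[OF img c] unfolding inj_on_def by blast
      then show ?case using Suc j' by simp
    qed
  qed
  show ?thesis
  proof (cases "i < j")
    case True then show ?thesis using canc[OF True ij(2)] by (intro exI[of _ "j-i"]) auto
  next
    case False then have "j < i" using ij by simp
    then show ?thesis using canc[of j i] ij(2) by (intro exI[of _ "i-j"]) auto
  qed
qed

locale pinj =
  fixes X :: "'c set" and D :: "'c set" and f :: "'c \<Rightarrow> 'c"
  assumes finX: "finite X" and DX: "D \<subseteq> X" and fD: "f ` D \<subseteq> X" and injf: "inj_on f D"
begin

definition "starts = X - f ` D"
definition "periodic c \<longleftrightarrow> (\<exists>k>0. (\<forall>m<k. (f ^^ m) c \<in> D) \<and> (f ^^ k) c = c)"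
definition "reach a k c \<longleftrightarrow> (\<forall>m<k. (f ^^ m) a \<in> D) \<and> (f ^^ k) a = c"
definition "nn a = (LEAST n. (f ^^ n) a \<notin> D)"
definition "endp a = (f ^^ nn a) a"
definition "st c = (THE a. a \<in> starts \<and> (\<exists>k. reach a k c))"

lemma iter_X: "a \<in> X \<Longrightarrow> \<forall>m<k. (f ^^ m) a \<in> D \<Longrightarrow> (f ^^ k) a \<in> X"
proof (induction k)
  case 0 then show ?case by simp
next
  case (Suc k) then show ?case using fD by auto
qed

lemma term_start:
  assumes a: "a \<in> starts" shows "\<exists>n. (f ^^ n) a \<notin> D"
proof (rule ccontr)
  assume "\<not> ?thesis"
  then have allD: "\<forall>n. (f ^^ n) a \<in> D" by auto
  let ?Z = "range (\<lambda>n. (f ^^ n) a)"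
  have ZD: "?Z \<subseteq> D" using allD by auto
  have "?Z \<subseteq> X" using ZD DX by blast
  then have finZ: "finite ?Z" using finX by (rule finite_subset)
  have injZ: "inj_on f ?Z" using injf ZD by (rule inj_on_subset)
  have aZ: "a \<in> ?Z" by (metis funpow_0 rangeI)
  have imgZ: "f ` ?Z \<subseteq> ?Z"
  proof (rule image_subsetI)
    fix x assume "x \<in> ?Z"
    then obtain n where "x = (f ^^ n) a" by auto
    then have "f x = (f ^^ Suc n) a" by simp
    then show "f x \<in> ?Z" by (metis rangeI)
  qed
  obtain k where k: "k > 0" "(f ^^ k) a = a" using perm_periodic[OF finZ injZ imgZ aZ] by blast
  then obtain k' where kk: "k = Suc k'" by (cases k) auto
  have "a = f ((f ^^ k') a)" using k(2) unfolding kk by simp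
  then have "a \<in> f ` D" using allD by auto
  then show False using a unfolding starts_def by auto
qed

lemma nn_props:
  assumes a: "a \<in> starts"
  shows "(f ^^ nn a) a \<notin> D" "\<And>m. m < nn a \<Longrightarrow> (f ^^ m) a \<in> D"
proof -
  obtain n where "(f ^^ n) a \<notin> D" using term_start[OF a] by blast
  then show "(f ^^ nn a) a \<notin> D" unfolding nn_def by (rule LeastI)
  show "\<And>m. m < nn a \<Longrightarrow> (f ^^ m) a \<in> D" unfolding nn_def using not_less_Least by blast
qed

lemma reach_unique:
  assumes a: "a \<in> starts" and b: "b \<in> starts" and ra: "reach a i c" and rb: "reach b j c"
  shows "a = b \<and> i = j"
  using ra rb
proof (induction i arbitrary: j c)
  case 0
  then have "a = (f ^^ j) b" unfolding reach_def by simp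
  show ?case
  proof (cases j)
    case 0 then show ?thesis using \<open>a = _\<close> by simp
  next
    case (Suc j')
    then have "a = f ((f ^^ j') b)" using \<open>a = _\<close> by simp
    moreover have "(f ^^ j') b \<in> D" using "0.prems"(2) Suc unfolding reach_def by auto
    ultimately show ?thesis using a unfolding starts_def by auto
  qed
next
  case (Suc i)
  show ?case
  proof (cases j)
    case 0
    then have "b = f ((f ^^ i) a)" using Suc.prems unfolding reach_def by simp
    moreover have "(f ^^ i) a \<in> D" using Suc.prems(1) unfolding reach_def by auto
    ultimately show ?thesis using b unfolding starts_def by auto
  next
    case (Suc j')
    have d1: "(f ^^ i) a \<in> D" "(f ^^ j') b \<in> D" using Suc.prems \<open>j = Suc j'\<close> unfolding reach_def by auto
    have "f ((f ^^ i) a) = f ((f ^^ j') b)" using Suc.prems \<open>j = Suc j'\<close> unfolding reach_def by simp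
    then have e: "(f ^^ i) a = (f ^^ j') b" using injf d1 unfolding inj_on_def by blast
    have "reach a i ((f ^^ i) a)" "reach b j' ((f ^^ i) a)"
      using Suc.prems \<open>j = Suc j'\<close> e unfolding reach_def by auto
    from Suc.IH[OF this] show ?thesis using \<open>j = Suc j'\<close> by simp
  qed
qed

lemma exists_start:
  assumes c: "c \<in> X" and np: "\<not> periodic c"
  shows "\<exists>a\<in>starts. \<exists>k. reach a k c"
proof (rule ccontr)
  assume nc: "\<not> ?thesis"
  define Z where "Z = {d\<in>X. \<not> (\<exists>a\<in>starts. \<exists>k. reach a k d)}"
  have cZ: "c \<in> Z" using c nc unfolding Z_def by auto
  have finZ: "finite Z" using finX unfolding Z_def by auto
  have Zf: "Z \<subseteq> f ` (D \<inter> Z)"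
  proof
    fix d assume d: "d \<in> Z"
    have "d \<notin> starts"
    proof
      assume "d \<in> starts" then have "reach d 0 d" unfolding reach_def by simp
      then show False using d \<open>d \<in> starts\<close> unfolding Z_def by blast
    qed
    then obtain d' where d': "d' \<in> D" "f d' = d" using d unfolding starts_def Z_def by auto
    have "d' \<in> Z"
    proof (rule ccontr)
      assume "d' \<notin> Z"
      then obtain a k where "a \<in> starts" "reach a k d'" using d' DX unfolding Z_def by auto
      then have "reach a (Suc k) d" using d' unfolding reach_def
        by (auto simp: less_Suc_eq)
      then show False using d \<open>a \<in> starts\<close> unfolding Z_def by blast
    qed
    then show "d \<in> f ` (D \<inter> Z)" using d' by auto
  qed
  have "card Z \<le> card (D \<inter> Z)"
    using card_mono[OF finite_imageI Zf] card_image_le[of "D \<inter> Z" f] finZ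
    by (meson finite_Int le_trans)
  then have "D \<inter> Z = Z" using finZ by (intro card_seteq) auto
  then have ZD: "Z \<subseteq> D" by blast
  have fZ: "f ` Z \<subseteq> Z"
  proof
    fix y assume "y \<in> f ` Z"
    then obtain d where d: "d \<in> Z" "y = f d" by auto
    have "y \<in> X" using d ZD fD by auto
    moreover have "\<not> (\<exists>a\<in>starts. \<exists>k. reach a k y)"
    proof
      assume "\<exists>a\<in>starts. \<exists>k. reach a k y"
      then obtain a k where ak: "a \<in> starts" "reach a k y" by blast
      show False
      proof (cases k)
        case 0
        then have "a = f d" using ak d unfolding reach_def by simp
        then show False using ak(1) d ZD unfolding starts_def by auto
      next
        case (Suc k')
        then have "f ((f ^^ k') a) = f d" "(f ^^ k') a \<in> D" using ak d unfolding reach_def by auto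
        then have "(f ^^ k') a = d" using injf d ZD unfolding inj_on_def by blast
        then have "reach a k' d" using ak Suc unfolding reach_def by auto
        then show False using d ak(1) unfolding Z_def by blast
      qed
    qed
    ultimately show "y \<in> Z" unfolding Z_def by blast
  qed
  obtain k where k: "k > 0" "(f ^^ k) c = c"
    using perm_periodic[OF finZ inj_on_subset[OF injf ZD] fZ cZ] by blast
  have "\<forall>m<k. (f ^^ m) c \<in> D" using funpow_in[OF fZ cZ] ZD by auto
  then have "periodic c" using k unfolding periodic_def by blast
  then show False using np by simp
qed

lemma st_props:
  assumes c: "c \<in> X" and np: "\<not> periodic c"
  shows "st c \<in> starts" "\<exists>k. reach (st c) k c"
proof -
  obtain a k where ak: "a \<in> starts" "reach a k c" using exists_start[OF c np] by blast
  have "st c = a" unfolding st_def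
    by (rule the_equality) (use ak reach_unique in blast)+
  then show "st c \<in> starts" "\<exists>k. reach (st c) k c" using ak by auto
qed

lemma st_eq: "a \<in> starts \<Longrightarrow> reach a k c \<Longrightarrow> st c = a"
  unfolding st_def by (rule the_equality) (use reach_unique in blast)+

lemma st_start: "a \<in> starts \<Longrightarrow> st a = a"
  by (rule st_eq[of a 0]) (auto simp: reach_def)

lemma notD_nonper: "c \<notin> D \<Longrightarrow> \<not> periodic c"
  unfolding periodic_def by (metis funpow_0)

lemma reach_end: "a \<in> starts \<Longrightarrow> reach a k c \<Longrightarrow> c \<notin> D \<Longrightarrow> nn a = k"
proof -
  assume a: "a \<in> starts" and r: "reach a k c" and c: "c \<notin> D"
  have "nn a \<le> k" unfolding nn_def using r c unfolding reach_def by (auto intro: Least_le)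
  moreover have "\<not> nn a < k" using r nn_props[OF a] unfolding reach_def by auto
  ultimately show ?thesis by simp
qed

lemma endp_st: "c \<in> X \<Longrightarrow> c \<notin> D \<Longrightarrow> endp (st c) = c"
  using st_props[OF _ notD_nonper] reach_end unfolding endp_def reach_def by metis

lemma endp_inj: "a \<in> starts \<Longrightarrow> b \<in> starts \<Longrightarrow> endp a = endp b \<Longrightarrow> a = b"
  using reach_unique[of a b "nn a" "endp a" "nn b"] nn_props unfolding reach_def endp_def by metis

lemma endp_X: "a \<in> starts \<Longrightarrow> endp a \<in> X"
  unfolding endp_def using iter_X nn_props starts_def by auto

lemma st_endp: "a \<in> starts \<Longrightarrow> st (endp a) = a"
  using st_eq nn_props unfolding reach_def endp_def by blast

end


definition edges :: "'a set \<Rightarrow> ('a \<Rightarrow> 'v) \<Rightarrow> ('a \<Rightarrow> 'v) \<Rightarrow> ('v \<times> 'v) set" where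
  "edges B s t = {(s a, t a) | a. a \<in> B} \<union> {(t a, s a) | a. a \<in> B}"

lemma edges_conv: "(edges B s t)\<inverse> = edges B s t"
  unfolding edges_def by auto

lemma edges_sym_rt: "(x, y) \<in> (edges B s t)\<^sup>* \<Longrightarrow> (y, x) \<in> (edges B s t)\<^sup>*"
  by (metis edges_conv rtrancl_converseI)

lemma map_conn:
  assumes "(x, y) \<in> (edges B s t)\<^sup>*" and "m (s a) = m (t a)"
  shows "(m x, m y) \<in> (edges (B - {a}) (m \<circ> s) (m \<circ> t))\<^sup>*"
  using assms(1)
proof (induction rule: rtrancl_induct)
  case base then show ?case by simp
next
  case (step y z)
  have "(m y, m z) \<in> (edges (B - {a}) (m \<circ> s) (m \<circ> t))\<^sup>*"
  proof -
    from step(2) obtain b where b: "b \<in> B" "(y = s b \<and> z = t b) \<or> (y = t b \<and> z = s b)"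
      unfolding edges_def by auto
    show ?thesis
    proof (cases "b = a")
      case True then show ?thesis using b assms(2) by auto
    next
      case False
      then have "(m y, m z) \<in> edges (B - {a}) (m \<circ> s) (m \<circ> t)"
        using b unfolding edges_def by auto
      then show ?thesis by simp
    qed
  qed
  with step(3) show ?case by (rule rtrancl_trans)
qed

lemma conn_bound:
  assumes "finite B" "finite V" "\<forall>a\<in>B. s a \<in> V \<and> t a \<in> V"
    "\<forall>x\<in>V. \<forall>y\<in>V. (x, y) \<in> (edges B s t)\<^sup>*"
  shows "card V \<le> card B + 1"
  using assms
proof (induction "card B" arbitrary: B V s t)
  case 0
  then have "B = {}" by simp
  then have "edges B s t = {}" unfolding edges_def by simp
  then have "\<forall>x\<in>V. \<forall>y\<in>V. x = y" using 0 by simp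
  then have "card V \<le> Suc 0" using card_le_Suc0_iff_eq[OF \<open>finite V\<close>] by blast
  then show ?case by simp
next
  case (Suc n)
  then obtain a where a: "a \<in> B" by (metis card.empty ex_in_conv nat.simps(3))
  have cB: "card (B - {a}) = n" using Suc a by simp
  show ?case
  proof (cases "s a = t a")
    case True
    have "card V \<le> card (B - {a}) + 1"
    proof (rule Suc.hyps(1)[OF cB[symmetric]])
      show "finite (B - {a})" "finite V" using Suc by auto
      show "\<forall>b\<in>B - {a}. s b \<in> V \<and> t b \<in> V" using Suc by auto
      show "\<forall>x\<in>V. \<forall>y\<in>V. (x, y) \<in> (edges (B - {a}) s t)\<^sup>*"
        using map_conn[of _ _ B s t id a] True Suc.prems(4) by simp
    qed
    then show ?thesis using cB Suc by simp
  next
    case False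
    define m where "m v = (if v = t a then s a else v)" for v
    have ms: "m (s a) = m (t a)" unfolding m_def using False by simp
    have "card (V - {t a}) \<le> card (B - {a}) + 1"
    proof (rule Suc.hyps(1)[OF cB[symmetric], of _ "m \<circ> s" "m \<circ> t"])
      show "finite (B - {a})" "finite (V - {t a})" using Suc by auto
      show "\<forall>b\<in>B - {a}. (m \<circ> s) b \<in> V - {t a} \<and> (m \<circ> t) b \<in> V - {t a}"
        using Suc.prems(3) a False unfolding m_def by auto
      show "\<forall>x\<in>V - {t a}. \<forall>y\<in>V - {t a}. (x, y) \<in> (edges (B - {a}) (m \<circ> s) (m \<circ> t))\<^sup>*"
      proof (intro ballI)
        fix x y assume "x \<in> V - {t a}" "y \<in> V - {t a}"
        then have mx: "m x = x" "m y = y" and xy: "(x, y) \<in> (edges B s t)\<^sup>*" using Suc.prems(4) unfolding m_def by auto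
        have "(m x, m y) \<in> (edges (B - {a}) (m \<circ> s) (m \<circ> t))\<^sup>*" by (rule map_conn[OF xy ms])
        then show "(x, y) \<in> (edges (B - {a}) (m \<circ> s) (m \<circ> t))\<^sup>*" unfolding mx .
      qed
    qed
    moreover have "t a \<in> V" using Suc.prems(3) a by auto
    ultimately show ?thesis using cB Suc.prems(2) Suc.hyps(2)
      by (simp add: card_Diff_singleton)
  qed
qed

lemma tree_cut:
  assumes "finite B" "finite V" "\<forall>a\<in>B. s a \<in> V \<and> t a \<in> V"
    "\<forall>x\<in>V. \<forall>y\<in>V. (x, y) \<in> (edges B s t)\<^sup>*" "card V = card B + 1" "a \<in> B"
  shows "(s a, t a) \<notin> (edges (B - {a}) s t)\<^sup>*"
proof
  assume st: "(s a, t a) \<in> (edges (B - {a}) s t)\<^sup>*"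
  have stp: "(u, v) \<in> (edges (B - {a}) s t)\<^sup>*" if "(u, v) \<in> edges B s t" for u v
  proof -
    from that obtain b where b: "b \<in> B" "(u = s b \<and> v = t b) \<or> (u = t b \<and> v = s b)"
      unfolding edges_def by auto
    show ?thesis
    proof (cases "b = a")
      case True
      have "(t a, s a) \<in> (edges (B - {a}) s t)\<^sup>*" using st by (rule edges_sym_rt)
      from b(2) show ?thesis unfolding True using st \<open>(t a, s a) \<in> _\<close> by (elim disjE conjE) simp_all
    next
      case False
      then have "(u, v) \<in> edges (B - {a}) s t" using b unfolding edges_def by auto
      then show ?thesis by simp
    qed
  qed
  have conn: "\<forall>x\<in>V. \<forall>y\<in>V. (x, y) \<in> (edges (B - {a}) s t)\<^sup>*"
  proof (intro ballI)
    fix x y assume "x \<in> V" "y \<in> V"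
    then have "(x, y) \<in> (edges B s t)\<^sup>*" using assms(4) by auto
    then show "(x, y) \<in> (edges (B - {a}) s t)\<^sup>*"
    proof (induction rule: rtrancl_induct)
      case base then show ?case by simp
    next
      case (step y z) show ?case by (rule rtrancl_trans[OF step(3) stp[OF step(2)]])
    qed
  qed
  have "card V \<le> card (B - {a}) + 1"
  proof (rule conn_bound)
    show "finite (B - {a})" using assms(1) by simp
    show "finite V" by (rule assms(2))
    show "\<forall>b\<in>B - {a}. s b \<in> V \<and> t b \<in> V" using assms(3) by blast
  qed (rule conn)
  moreover have "card B > 0" using assms(1,6) card_gt_0_iff by blast
  ultimately show False using assms(1,5,6) by (simp add: card_Diff_singleton)
qed


lemma three_le2:
  assumes "finite S" "card S \<le> 2" "a \<in> S" "b \<in> S" "c \<in> S" "a \<noteq> b" "a \<noteq> c" "b \<noteq> c"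
  shows False
proof -
  have "{a, b, c} \<subseteq> S" using assms by auto
  then have "card {a, b, c} \<le> card S" by (rule card_mono[OF assms(1)])
  then show False using assms by simp
qed

lemma two_le1:
  assumes "finite S" "card S \<le> 1" "a \<in> S" "b \<in> S" shows "a = b"
  using assms by (metis One_nat_def card_le_Suc0_iff_eq)

lemma signs_exist:
  fixes V :: "'v set" and A :: "'a set" and s t :: "'a \<Rightarrow> 'v" and R :: "('a \<times> 'a) set"
  assumes g: "gentle V A s t R"
  shows "\<exists>\<sigma> \<tau>. valid_signs A s t R \<sigma> \<tau>"
proof -
  have finA: "finite A" using g unfolding gentle_def by auto
  have outs: "\<And>x. card {a\<in>A. s a = x} \<le> 2" and ins: "\<And>x. card {a\<in>A. t a = x} \<le> 2"
  proof -
    fix x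
    show "card {a\<in>A. s a = x} \<le> 2"
    proof (cases "x \<in> V")
      case True then show ?thesis using g unfolding gentle_def by auto
    next
      case False
      then have "{a\<in>A. s a = x} = {}" using g unfolding gentle_def by auto
      then show ?thesis by (metis card.empty le0)
    qed
    show "card {a\<in>A. t a = x} \<le> 2"
    proof (cases "x \<in> V")
      case True then show ?thesis using g unfolding gentle_def by auto
    next
      case False
      then have "{a\<in>A. t a = x} = {}" using g unfolding gentle_def by auto
      then show ?thesis by (metis card.empty le0)
    qed
  qed
  have c2: "\<And>b. b \<in> A \<Longrightarrow> card {c\<in>A. s c = t b \<and> (c,b) \<notin> R} \<le> 1"
   and c2': "\<And>a. a \<in> A \<Longrightarrow> card {c\<in>A. t c = s a \<and> (a,c) \<notin> R} \<le> 1"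
   and c3: "\<And>b. b \<in> A \<Longrightarrow> card {c. (c,b) \<in> R} \<le> 1"
   and c3': "\<And>a. a \<in> A \<Longrightarrow> card {c. (a,c) \<in> R} \<le> 1"
    using g unfolding gentle_def by auto
  have RA: "\<And>a b. (a,b) \<in> R \<Longrightarrow> a \<in> A \<and> b \<in> A \<and> s a = t b" using g unfolding gentle_def by auto
  have finR1: "\<And>b. finite {c. (c,b) \<in> R}"
    by (rule finite_subset[OF _ finA]) (use RA in auto)
  have finR2: "\<And>a. finite {c. (a,c) \<in> R}"
    by (rule finite_subset[OF _ finA]) (use RA in auto)
  obtain h :: "'a \<Rightarrow> nat" where h: "inj_on h A" using finA finite_imp_inj_to_nat_seg by blast
  define sg where "sg a = (if \<exists>b\<in>A. b \<noteq> a \<and> s b = s a \<and> h b < h a then -1 else (1::int))" for a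
  define a0 where "a0 b = (SOME a. a \<in> A \<and> s a = t b)" for b
  define tg where "tg b = (if \<exists>a\<in>A. s a = t b then (if (a0 b, b) \<in> R then sg (a0 b) else - sg (a0 b))
      else if \<exists>c\<in>A. c \<noteq> b \<and> t c = t b \<and> h c < h b then -1 else (1::int))" for b
  have sg1: "sg a \<in> {1,-1}" for a unfolding sg_def by auto
  have sgd: "sg a = - sg b" if "a \<in> A" "b \<in> A" "a \<noteq> b" "s a = s b" for a b
  proof -
    have hne: "h a \<noteq> h b" using h that unfolding inj_on_def by blast
    have key: "sg x = -1 \<and> sg y = 1" if xy: "x \<in> A" "y \<in> A" "x \<noteq> y" "s x = s y" "h y < h x" for x y
    proof -
      have "sg x = -1" using xy unfolding sg_def by auto
      moreover have "sg y = 1"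
      proof (rule ccontr)
        assume "sg y \<noteq> 1"
        then obtain c where c: "c \<in> A" "c \<noteq> y" "s c = s y" "h c < h y" unfolding sg_def by (auto split: if_splits)
        have "c \<noteq> x" using c xy by auto
        show False using three_le2[of "{a\<in>A. s a = s y}" x y c] outs[of "s y"] finA c xy \<open>c \<noteq> x\<close> by auto
      qed
      ultimately show ?thesis by simp
    qed
    show ?thesis using key[of a b] key[of b a] that hne by (cases "h a < h b") auto
  qed
  have a0P: "a0 b \<in> A \<and> s (a0 b) = t b" if "\<exists>a\<in>A. s a = t b" for b
    unfolding a0_def by (rule someI_ex) (use that in auto)
  have exactly1: "((a,b) \<in> R) \<noteq> ((a',b) \<in> R)" if "a \<in> A" "a' \<in> A" "b \<in> A" "a \<noteq> a'" "s a = t b" "s a' = t b" for a a' b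
  proof
    assume eq: "((a,b) \<in> R) = ((a',b) \<in> R)"
    show False
    proof (cases "(a,b) \<in> R")
      case True then show False using two_le1[OF finR1 c3[OF that(3)], of a a'] eq that by auto
    next
      case False
      have "finite {c\<in>A. s c = t b \<and> (c,b) \<notin> R}" using finA by auto
      then show False using two_le1[OF _ c2[OF that(3)], of a a'] eq that False by auto
    qed
  qed
  have exactly1': "((a,b) \<in> R) \<noteq> ((a,b') \<in> R)" if "a \<in> A" "b' \<in> A" "b \<in> A" "b \<noteq> b'" "s a = t b" "s a = t b'" for a b b'
  proof
    assume eq: "((a,b) \<in> R) = ((a,b') \<in> R)"
    show False
    proof (cases "(a,b) \<in> R")
      case True then show False using two_le1[OF finR2 c3'[OF that(1)], of b b'] eq that by auto
    next
      case False
      have "finite {c\<in>A. t c = s a \<and> (a,c) \<notin> R}" using finA by auto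
      then show False using two_le1[OF _ c2'[OF that(1)], of b b'] eq that False by auto
    qed
  qed
  have tg1: "tg b \<in> {1,-1}" for b using sg1[of "a0 b"] unfolding tg_def by auto
  have tgd: "tg a = - tg b" if "a \<in> A" "b \<in> A" "a \<noteq> b" "t a = t b" for a b
  proof (cases "\<exists>c\<in>A. s c = t b")
    case True
    then have ex2: "\<exists>c\<in>A. s c = t a" using that by simp
    have same: "a0 a = a0 b" unfolding a0_def using that by simp
    have A0: "a0 b \<in> A" "s (a0 b) = t b" using a0P[OF True] by auto
    have "((a0 b, a) \<in> R) \<noteq> ((a0 b, b) \<in> R)"
      using exactly1'[of "a0 b" b a] A0 that by auto
    then show ?thesis unfolding tg_def using True ex2 same sg1[of "a0 b"] by auto
  next
    case False
    then have nf: "\<not> (\<exists>c\<in>A. s c = t a)" using that by simp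
    have hne: "h a \<noteq> h b" using h that unfolding inj_on_def by blast
    have key: "tg x = -1 \<and> tg y = 1" if xy: "x \<in> A" "y \<in> A" "x \<noteq> y" "t x = t y" "h y < h x"
        "\<not> (\<exists>c\<in>A. s c = t x)" for x y
    proof -
      have nfy: "\<not> (\<exists>c\<in>A. s c = t y)" using xy by simp
      have "tg x = -1" using xy unfolding tg_def by auto
      moreover have "tg y = 1"
      proof (rule ccontr)
        assume "tg y \<noteq> 1"
        then obtain c where c: "c \<in> A" "c \<noteq> y" "t c = t y" "h c < h y" using nfy unfolding tg_def by (auto split: if_splits)
        have "c \<noteq> x" using c xy by auto
        show False using three_le2[of "{a\<in>A. t a = t y}" x y c] ins[of "t y"] finA c xy \<open>c \<noteq> x\<close> by auto
      qed
      ultimately show ?thesis by simp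
    qed
    show ?thesis using key[of a b] key[of b a] that hne nf False by (cases "h a < h b") auto
  qed
  have rel: "((a,b) \<in> R) = (sg a = tg b)" if "a \<in> A" "b \<in> A" "s a = t b" for a b
  proof -
    have ex: "\<exists>c\<in>A. s c = t b" using that by auto
    have A0: "a0 b \<in> A" "s (a0 b) = t b" using a0P[OF ex] by auto
    show ?thesis
    proof (cases "a = a0 b")
      case True then show ?thesis unfolding tg_def using ex sg1[of a] by auto
    next
      case False
      have "sg a = - sg (a0 b)" using sgd[of a "a0 b"] A0 that False by auto
      moreover have "((a,b) \<in> R) \<noteq> ((a0 b,b) \<in> R)" using exactly1[of a "a0 b" b] A0 that False by auto
      ultimately show ?thesis unfolding tg_def using ex sg1[of a] sg1[of "a0 b"] by auto
    qed
  qed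
  have "valid_signs A s t R sg tg"
    unfolding valid_signs_def using sg1 tg1 sgd tgd rel by blast
  then show ?thesis by blast
qed


definition dd :: "bool \<Rightarrow> int" where "dd b = (if b then 1 else -1)"

lemma dd_sq[simp]: "dd b * dd b = 1" unfolding dd_def by simp
lemma dd_cancel[simp]: "dd b * (dd b * x) = x" unfolding dd_def by simp
lemma dd_simps[simp]: "dd True = 1" "dd False = -1" unfolding dd_def by simp_all

fun sigd :: "('a \<Rightarrow> int) \<Rightarrow> ('v,'a) qpath \<Rightarrow> int" where
  "sigd \<sigma> (Triv x e) = e" | "sigd \<sigma> (Arr l) = \<sigma> (last l)"
fun taud :: "bool \<Rightarrow> ('a \<Rightarrow> int) \<Rightarrow> ('v,'a) qpath \<Rightarrow> int" where
  "taud b \<tau> (Triv x e) = dd b * e" | "taud b \<tau> (Arr l) = \<tau> (hd l)"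

locale Q =
  fixes V :: "'v set" and A :: "'a set" and s t :: "'a \<Rightarrow> 'v" and R :: "('a \<times> 'a) set"
    and \<sigma> \<tau> :: "'a \<Rightarrow> int"
  assumes gen: "gentle V A s t R" and vs: "valid_signs A s t R \<sigma> \<tau>"
begin

lemma finV: "finite V" and finA: "finite A" and endV: "\<And>a. a \<in> A \<Longrightarrow> s a \<in> V \<and> t a \<in> V"
  using gen unfolding gentle_def by auto

lemma sg: "a \<in> A \<Longrightarrow> \<sigma> a \<in> {1,-1}" and tg: "a \<in> A \<Longrightarrow> \<tau> a \<in> {1,-1}"
  using vs unfolding valid_signs_def by auto

lemma out_inj:
  assumes "a \<in> A" "b \<in> A" "s a = s b" "\<sigma> a = \<sigma> b" shows "a = b"
proof (rule ccontr)
  assume "a \<noteq> b"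
  then have "\<sigma> a = - \<sigma> b" using vs assms unfolding valid_signs_def by blast
  then show False using sg[OF assms(2)] assms(4) by auto
qed

lemma in_inj:
  assumes "a \<in> A" "b \<in> A" "t a = t b" "\<tau> a = \<tau> b" shows "a = b"
proof (rule ccontr)
  assume "a \<noteq> b"
  then have "\<tau> a = - \<tau> b" using vs assms unfolding valid_signs_def by blast
  then show False using tg[OF assms(2)] assms(4) by auto
qed

lemma relR: "a \<in> A \<Longrightarrow> b \<in> A \<Longrightarrow> s a = t b \<Longrightarrow> ((a,b) \<in> R) = (\<sigma> a = \<tau> b)"
  using vs unfolding valid_signs_def by blast

definition "Ch = V \<times> {1, -1::int}"
definition "D = (\<lambda>a. (s a, \<sigma> a)) ` A"
definition "arr c = (THE a. a \<in> A \<and> (s a, \<sigma> a) = c)"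
definition "F b c = (t (arr c), dd b * \<tau> (arr c))"

lemma arr_OUT[simp]: "a \<in> A \<Longrightarrow> arr (s a, \<sigma> a) = a"
  unfolding arr_def by (rule the_equality) (auto intro: out_inj)

lemma arr_D: "c \<in> D \<Longrightarrow> arr c \<in> A \<and> (s (arr c), \<sigma> (arr c)) = c"
  unfolding D_def by auto

lemma F_OUT[simp]: "a \<in> A \<Longrightarrow> F b (s a, \<sigma> a) = (t a, dd b * \<tau> a)"
  unfolding F_def by simp

lemma finCh: "finite Ch" unfolding Ch_def using finV by simp
lemma DCh: "D \<subseteq> Ch" unfolding D_def Ch_def using endV sg by auto
lemma FD: "F b ` D \<subseteq> Ch"
proof
  fix y assume "y \<in> F b ` D"
  then obtain a where a: "a \<in> A" "y = F b (s a, \<sigma> a)" unfolding D_def by auto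
  have "\<tau> a = 1 \<or> \<tau> a = -1" using tg[OF a(1)] by simp
  then show "y \<in> Ch" using a endV[OF a(1)] unfolding Ch_def by (cases b) auto
qed
lemma injF: "inj_on (F b) D"
proof (rule inj_onI)
  fix c c' assume c: "c \<in> D" "c' \<in> D" "F b c = F b c'"
  then have "t (arr c) = t (arr c')" "\<tau> (arr c) = \<tau> (arr c')" unfolding F_def dd_def by (auto split: if_splits)
  then have "arr c = arr c'" using in_inj arr_D c by blast
  then show "c = c'" using arr_D c by metis
qed

lemma pinjF: "pinj Ch D (F b)"
  by unfold_locales (auto simp: finCh DCh FD injF)

abbreviation "Sd b \<equiv> pinj.starts Ch D (F b)"
abbreviation "nnd b \<equiv> pinj.nn D (F b)"
abbreviation "endd b \<equiv> pinj.endp D (F b)"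
abbreviation "STd b \<equiv> pinj.st Ch D (F b)"

definition "mk b c = (if nnd b c = 0 then Triv (fst c) (snd c)
    else Arr (rev (map (\<lambda>i. arr ((F b ^^ i) c)) [0..<nnd b c])))"

definition "pathd b w = (case w of Triv x e \<Rightarrow> x \<in> V \<and> e \<in> {1,-1}
   | Arr l \<Rightarrow> is_qpath A s t l \<and> (\<forall>i. Suc i < length l \<longrightarrow> \<sigma> (l!i) = dd b * \<tau> (l ! Suc i)))"

definition "maxd b = {w. pathd b w \<and> \<not> (\<exists>a\<in>A. s a = ptgt t w \<and> \<sigma> a = dd b * taud b \<tau> w)
     \<and> \<not> (\<exists>c\<in>A. t c = psrc s w \<and> \<tau> c = dd b * sigd \<sigma> w)}"

lemma Sd_iff: "c \<in> Sd b \<longleftrightarrow> c \<in> Ch \<and> \<not> (\<exists>a\<in>A. t a = fst c \<and> \<tau> a = dd b * snd c)"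
proof -
  have "c \<in> F b ` D \<longleftrightarrow> (\<exists>a\<in>A. t a = fst c \<and> \<tau> a = dd b * snd c)"
  proof
    assume "c \<in> F b ` D"
    then obtain a where a: "a \<in> A" "c = F b (s a, \<sigma> a)" unfolding D_def by auto
    then have "c = (t a, dd b * \<tau> a)" by simp
    then show "\<exists>a\<in>A. t a = fst c \<and> \<tau> a = dd b * snd c" using a(1) by auto
  next
    assume "\<exists>a\<in>A. t a = fst c \<and> \<tau> a = dd b * snd c"
    then obtain a where a: "a \<in> A" "t a = fst c" "\<tau> a = dd b * snd c" by blast
    then have e: "F b (s a, \<sigma> a) = c" by (cases c) simp
    have "(s a, \<sigma> a) \<in> D" unfolding D_def using a(1) by (rule imageI)
    then show "c \<in> F b ` D" unfolding e[symmetric] by (rule imageI)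
  qed
  moreover have "Sd b = Ch - F b ` D" by (rule pinj.starts_def[OF pinjF])
  ultimately show ?thesis by simp
qed

lemma D_iff: "c \<in> D \<longleftrightarrow> (\<exists>a\<in>A. s a = fst c \<and> \<sigma> a = snd c)"
  unfolding D_def by force

lemma nn_facts:
  assumes "c \<in> Sd b"
  shows "(F b ^^ nnd b c) c \<notin> D" "\<And>m. m < nnd b c \<Longrightarrow> (F b ^^ m) c \<in> D"
  using pinj.nn_props[OF pinjF assms] by auto

end


context Q begin

lemma iter_arr:
  assumes "c \<in> Sd b" "m < nnd b c"
  shows "arr ((F b ^^ m) c) \<in> A" "s (arr ((F b ^^ m) c)) = fst ((F b ^^ m) c)"
    "\<sigma> (arr ((F b ^^ m) c)) = snd ((F b ^^ m) c)"
  using arr_D[OF nn_facts(2)[OF assms]] by (auto simp: prod_eq_iff)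

lemma F_def2: "F b d = (t (arr d), dd b * \<tau> (arr d))" unfolding F_def ..
lemma F_fst[simp]: "fst (F b d) = t (arr d)" unfolding F_def by simp
lemma F_snd[simp]: "snd (F b d) = dd b * \<tau> (arr d)" unfolding F_def by simp

lemma iter_Suc_fst: "fst ((F b ^^ Suc k) c) = t (arr ((F b ^^ k) c))" by (simp add: F_def)
lemma iter_Suc_snd: "snd ((F b ^^ Suc k) c) = dd b * \<tau> (arr ((F b ^^ k) c))" by (simp add: F_def)

lemma Sd_Ch: "c \<in> Sd b \<Longrightarrow> c \<in> Ch" using Sd_iff by blast

lemma Ch_snd: "c \<in> Ch \<Longrightarrow> snd c = 1 \<or> snd c = -1" unfolding Ch_def by auto

lemma mk_Arr:
  assumes "c \<in> Sd b" "nnd b c \<noteq> 0"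
  shows "mk b c = Arr (rev (map (\<lambda>i. arr ((F b ^^ i) c)) [0..<nnd b c]))"
  using assms unfolding mk_def by simp

lemma mk_Triv:
  assumes "nnd b c = 0"
  shows "mk b c = Triv (fst c) (snd c)"
  using assms unfolding mk_def by simp

lemma plen_mk: "plen (mk b c) = nnd b c"
  unfolding mk_def by simp

lemma endd_def2: "endd b c = (F b ^^ nnd b c) c"
  by (rule pinj.endp_def[OF pinjF])

lemma mk_src:
  assumes c: "c \<in> Sd b"
  shows "psrc s (mk b c) = fst c" "sigd \<sigma> (mk b c) = snd c"
proof -
  have "psrc s (mk b c) = fst c \<and> sigd \<sigma> (mk b c) = snd c"
  proof (cases "nnd b c = 0")
    case True then show ?thesis by (simp add: mk_Triv)
  next
    case False
    then have "0 < nnd b c" by simp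
    have l: "last (rev (map (\<lambda>i. arr ((F b ^^ i) c)) [0..<nnd b c])) = arr c"
      using False by (simp add: last_rev hd_map)
    show ?thesis using iter_arr[OF c \<open>0 < nnd b c\<close>] by (simp add: mk_Arr[OF c False] l)
  qed
  then show "psrc s (mk b c) = fst c" "sigd \<sigma> (mk b c) = snd c" by auto
qed

lemma mk_tgt:
  assumes c: "c \<in> Sd b"
  shows "ptgt t (mk b c) = fst (endd b c)" "taud b \<tau> (mk b c) = dd b * snd (endd b c)"
proof -
  have "ptgt t (mk b c) = fst (endd b c) \<and> taud b \<tau> (mk b c) = dd b * snd (endd b c)"
  proof (cases "nnd b c = 0")
    case True then show ?thesis by (simp add: mk_Triv endd_def2)
  next
    case False
    then obtain k where k: "nnd b c = Suc k" by (cases "nnd b c") auto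
    have h: "hd (rev (map (\<lambda>i. arr ((F b ^^ i) c)) [0..<nnd b c])) = arr ((F b ^^ k) c)"
      using k by (simp add: hd_rev last_map)
    show ?thesis by (simp add: mk_Arr[OF c False] h endd_def2 k iter_Suc_fst iter_Suc_snd)
  qed
  then show "ptgt t (mk b c) = fst (endd b c)" "taud b \<tau> (mk b c) = dd b * snd (endd b c)" by auto
qed

lemma src_max:
  assumes c: "c \<in> Sd b"
  shows "\<not> (\<exists>a\<in>A. t a = fst c \<and> \<tau> a = dd b * snd c)"
  using c Sd_iff by blast

lemma mk_maxd:
  assumes c: "c \<in> Sd b"
  shows "mk b c \<in> maxd b"
proof -
  have cCh: "c \<in> Ch" using Sd_Ch[OF c] .
  have endnD: "endd b c \<notin> D" using nn_facts(1)[OF c] endd_def2 by simp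
  have tgt: "\<not> (\<exists>a\<in>A. s a = ptgt t (mk b c) \<and> \<sigma> a = dd b * taud b \<tau> (mk b c))"
  proof
    assume "\<exists>a\<in>A. s a = ptgt t (mk b c) \<and> \<sigma> a = dd b * taud b \<tau> (mk b c)"
    then obtain a where a: "a \<in> A" "s a = fst (endd b c)" "\<sigma> a = snd (endd b c)"
      using mk_tgt[OF c] by auto
    then have "endd b c \<in> D" unfolding D_iff by blast
    then show False using endnD by simp
  qed
  have src: "\<not> (\<exists>a\<in>A. t a = psrc s (mk b c) \<and> \<tau> a = dd b * sigd \<sigma> (mk b c))"
    using src_max[OF c] mk_src[OF c] by simp
  have path: "pathd b (mk b c)"
  proof (cases "nnd b c = 0")
    case True
    then show ?thesis using cCh unfolding pathd_def mk_Triv[OF True] Ch_def by auto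
  next
    case False
    define n where "n = nnd b c"
    define xs where "xs = map (\<lambda>i. arr ((F b ^^ i) c)) [0..<n]"
    have lx: "length xs = n" unfolding xs_def by simp
    have xsn: "\<And>k. k < n \<Longrightarrow> xs ! k = arr ((F b ^^ k) c)" unfolding xs_def by simp
    have mkeq: "mk b c = Arr (rev xs)" unfolding xs_def n_def by (rule mk_Arr[OF c False])
    have ne: "rev xs \<noteq> []" using False lx n_def by auto
    have setA: "set (rev xs) \<subseteq> A"
    proof
      fix a assume "a \<in> set (rev xs)"
      then obtain k where "k < n" "a = xs ! k" using lx by (auto simp: in_set_conv_nth)
      then show "a \<in> A" using xsn iter_arr(1)[OF c] n_def by auto
    qed
    have links: "s (rev xs ! i) = t (rev xs ! Suc i) \<and> \<sigma> (rev xs ! i) = dd b * \<tau> (rev xs ! Suc i)"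
      if i: "Suc i < length (rev xs)" for i
    proof -
      define k where "k = n - Suc (Suc i)"
      have k1: "n - Suc i = Suc k" using i lx unfolding k_def by simp
      have kn: "Suc k < n" using i lx unfolding k_def by simp
      have r1: "rev xs ! i = arr ((F b ^^ Suc k) c)" using i lx k1 kn by (simp add: rev_nth xsn)
      have r2: "rev xs ! Suc i = arr ((F b ^^ k) c)" using i lx kn unfolding k_def by (simp add: rev_nth xsn)
      have "s (arr ((F b ^^ Suc k) c)) = fst ((F b ^^ Suc k) c)" "\<sigma> (arr ((F b ^^ Suc k) c)) = snd ((F b ^^ Suc k) c)"
        using iter_arr[OF c, of "Suc k"] kn n_def by auto
      then show ?thesis unfolding r1 r2 iter_Suc_fst iter_Suc_snd by simp
    qed
    show ?thesis unfolding mkeq pathd_def is_qpath_def using ne setA links by auto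
  qed
  show ?thesis unfolding maxd_def using path src tgt by blast
qed

lemma mk_inj: "inj_on (mk b) (Sd b)"
proof (rule inj_onI)
  fix c c' assume "c \<in> Sd b" "c' \<in> Sd b" "mk b c = mk b c'"
  then have "fst c = fst c'" "snd c = snd c'" using mk_src by metis+
  then show "c = c'" by (simp add: prod_eq_iff)
qed

end


context Q begin

lemma qpath_nth:
  assumes "is_qpath A s t l" "Suc i < length l"
  shows "l ! i \<in> A" "l ! Suc i \<in> A" "s (l ! i) = t (l ! Suc i)"
  using assms unfolding is_qpath_def by (auto simp: subset_iff)

lemma maxd_mk:
  assumes w: "w \<in> maxd b"
  shows "\<exists>c\<in>Sd b. w = mk b c"
proof (cases w)
  case (Triv x e)
  have p: "x \<in> V" "e \<in> {1,-1}" and m1: "\<not> (\<exists>a\<in>A. s a = x \<and> \<sigma> a = e)"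
    and m2: "\<not> (\<exists>a\<in>A. t a = x \<and> \<tau> a = dd b * e)"
    using w unfolding maxd_def pathd_def Triv by auto
  have cS: "(x,e) \<in> Sd b" by (subst Sd_iff) (use p m2 in \<open>auto simp: Ch_def\<close>)
  have nD: "(x,e) \<notin> D" unfolding D_iff using m1 by auto
  have "nnd b (x,e) = 0" unfolding pinj.nn_def[OF pinjF]
    by (rule Least_equality) (use nD in auto)
  then have "mk b (x,e) = w" unfolding Triv by (simp add: mk_Triv)
  then show ?thesis using cS by metis
next
  case (Arr l)
  have qp: "is_qpath A s t l" and lk: "\<And>i. Suc i < length l \<Longrightarrow> \<sigma> (l!i) = dd b * \<tau> (l ! Suc i)"
    and m1: "\<not> (\<exists>a\<in>A. s a = t (hd l) \<and> \<sigma> a = dd b * \<tau> (hd l))"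
    and m2: "\<not> (\<exists>a\<in>A. t a = s (last l) \<and> \<tau> a = dd b * \<sigma> (last l))"
    using w unfolding maxd_def pathd_def Arr by auto
  have ne: "l \<noteq> []" and setA: "set l \<subseteq> A" using qp unfolding is_qpath_def by auto
  define n where "n = length l"
  have n0: "n > 0" using ne n_def by simp
  define c where "c = (s (last l), \<sigma> (last l))"
  have lastA: "last l \<in> A" using ne setA by auto
  have rA: "\<And>i. i < n \<Longrightarrow> rev l ! i \<in> A" using setA n_def by (metis length_rev nth_mem set_rev subsetD)
  have it: "\<And>i. i < n \<Longrightarrow> (F b ^^ i) c = (s (rev l ! i), \<sigma> (rev l ! i))"
  proof -
    fix i assume "i < n"
    then show "(F b ^^ i) c = (s (rev l ! i), \<sigma> (rev l ! i))"
    proof (induction i)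
      case 0
      have "rev l ! 0 = last l" using ne by (simp add: hd_rev[symmetric] hd_conv_nth)
      then show ?case unfolding c_def by simp
    next
      case (Suc i)
      define j where "j = n - Suc (Suc i)"
      have j1: "n - Suc i = Suc j" using Suc.prems unfolding j_def by simp
      have jn: "Suc j < length l" using Suc.prems n_def unfolding j_def by simp
      have r1: "rev l ! Suc i = l ! j" using Suc.prems n_def unfolding j_def by (simp add: rev_nth)
      have r2: "rev l ! i = l ! Suc j" using Suc.prems n_def j1 by (simp add: rev_nth)
      have A1: "l ! Suc j \<in> A" and st: "s (l ! j) = t (l ! Suc j)" using qpath_nth[OF qp jn] by auto
      have "(F b ^^ Suc i) c = F b (s (l ! Suc j), \<sigma> (l ! Suc j))"
        using Suc.IH Suc.prems r2 by simp
      also have "\<dots> = (t (l ! Suc j), dd b * \<tau> (l ! Suc j))" using A1 by simp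
      also have "\<dots> = (s (rev l ! Suc i), \<sigma> (rev l ! Suc i))" using st lk[OF jn] r1 by simp
      finally show ?case .
    qed
  qed
  have inD: "\<And>i. i < n \<Longrightarrow> (F b ^^ i) c \<in> D" using it rA unfolding D_def by auto
  have notD: "(F b ^^ n) c \<notin> D"
  proof -
    obtain k where k: "n = Suc k" using n0 by (cases n) auto
    have hd: "rev l ! k = hd l" using ne k n_def by (simp add: rev_nth hd_conv_nth)
    have "(F b ^^ n) c = F b (s (hd l), \<sigma> (hd l))" using it[of k] k hd by simp
    also have "\<dots> = (t (hd l), dd b * \<tau> (hd l))" using ne setA by (intro F_OUT) (auto simp: hd_in_set subsetD)
    finally show ?thesis unfolding D_iff using m1 by auto
  qed
  have nn: "nnd b c = n" unfolding pinj.nn_def[OF pinjF]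
    by (rule Least_equality) (use notD inD not_less in auto)
  have cS: "c \<in> Sd b" by (subst Sd_iff) (use m2 endV[OF lastA] sg[OF lastA] in \<open>auto simp: Ch_def c_def\<close>)
  have "map (\<lambda>i. arr ((F b ^^ i) c)) [0..<n] = rev l"
    by (rule nth_equalityI) (auto simp: n_def it rA)
  then have "mk b c = w" unfolding Arr using mk_Arr[OF cS] nn n0 by simp
  then show ?thesis using cS by metis
qed

lemma maxd_eq: "maxd b = mk b ` Sd b"
  using maxd_mk mk_maxd by blast

lemma anti_iff:
  assumes "is_qpath A s t l"
  shows "(\<forall>i. Suc i < length l \<longrightarrow> (l!i, l!Suc i) \<in> R) \<longleftrightarrow>
         (\<forall>i. Suc i < length l \<longrightarrow> \<sigma> (l!i) = dd True * \<tau> (l!Suc i))"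
  using relR qpath_nth[OF assms] by simp

lemma perm_iff:
  assumes "is_qpath A s t l"
  shows "(\<forall>i. Suc i < length l \<longrightarrow> (l!i, l!Suc i) \<notin> R) \<longleftrightarrow>
         (\<forall>i. Suc i < length l \<longrightarrow> \<sigma> (l!i) = dd False * \<tau> (l!Suc i))"
proof -
  have "((l!i, l!Suc i) \<notin> R) = (\<sigma> (l!i) = - \<tau> (l!Suc i))" if "Suc i < length l" for i
  proof -
    have "((l!i, l!Suc i) \<in> R) = (\<sigma> (l!i) = \<tau> (l!Suc i))" using relR qpath_nth[OF assms that] by simp
    moreover have "\<sigma> (l!i) \<in> {1,-1}" "\<tau> (l!Suc i) \<in> {1,-1}" using sg tg qpath_nth[OF assms that] by auto
    ultimately show ?thesis by auto
  qed
  then show ?thesis by simp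
qed

lemma maxanti_eq: "maxanti V A s t R \<sigma> \<tau> = maxd True"
proof -
  have "w \<in> maxanti V A s t R \<sigma> \<tau> \<longleftrightarrow> w \<in> maxd True" for w
  proof (cases w)
    case (Triv x e) then show ?thesis unfolding maxanti_def maxd_def antipath_def pathd_def by simp
  next
    case (Arr l)
    show ?thesis
    proof (cases "is_qpath A s t l")
      case True
      show ?thesis unfolding maxanti_def maxd_def antipath_def pathd_def Arr using anti_iff[OF True] by simp
    next
      case False
      then show ?thesis unfolding maxanti_def maxd_def antipath_def pathd_def Arr by simp
    qed
  qed
  then show ?thesis by blast
qed

lemma maxperm_eq: "maxperm V A s t R \<sigma> \<tau> = maxd False"
proof -
  have "w \<in> maxperm V A s t R \<sigma> \<tau> \<longleftrightarrow> w \<in> maxd False" for w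
  proof (cases w)
    case (Triv x e) then show ?thesis unfolding maxperm_def maxd_def permitted_def pathd_def by simp
  next
    case (Arr l)
    show ?thesis
    proof (cases "is_qpath A s t l")
      case True
      show ?thesis unfolding maxperm_def maxd_def permitted_def pathd_def Arr using perm_iff[OF True] by simp
    next
      case False
      then show ?thesis unfolding maxperm_def maxd_def permitted_def pathd_def Arr by simp
    qed
  qed
  then show ?thesis by blast
qed

end


lemma sig_perm_eq: "sig_perm \<sigma> w = sigd \<sigma> w" by (cases w) auto
lemma sig_anti_eq: "sig_anti \<sigma> w = sigd \<sigma> w" by (cases w) auto
lemma tau_anti_eq: "tau_anti \<tau> w = taud True \<tau> w" by (cases w) auto
lemma tau_perm_eq: "tau_perm \<tau> w = taud False \<tau> w" by (cases w) auto

context Q begin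

definition "neg c = (fst c, - snd c)"

abbreviation "NN \<equiv> maxanti V A s t R \<sigma> \<tau>"
abbreviation "MM \<equiv> maxperm V A s t R \<sigma> \<tau>"

lemma neg_S:
  assumes "a \<in> Sd True" shows "neg a \<in> Sd False"
proof -
  have "a \<in> Ch" "\<not> (\<exists>x\<in>A. t x = fst a \<and> \<tau> x = dd True * snd a)" using assms Sd_iff by blast+
  then have "neg a \<in> Ch" "\<not> (\<exists>x\<in>A. t x = fst (neg a) \<and> \<tau> x = dd False * snd (neg a))"
    unfolding neg_def Ch_def by auto
  then show ?thesis using Sd_iff by blast
qed

lemma NN_eq: "NN = mk True ` Sd True" using maxanti_eq maxd_eq by simp
lemma MM_eq: "MM = mk False ` Sd False" using maxperm_eq maxd_eq by simp

lemma psi_mk: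
  assumes a: "a \<in> Sd True"
  shows "ag_psi V A s t R \<sigma> \<tau> (mk True a) = mk False (neg a)"
  unfolding ag_psi_def
proof (rule the_equality)
  show "mk False (neg a) \<in> MM \<and> psrc s (mk False (neg a)) = psrc s (mk True a) \<and>
      sig_perm \<sigma> (mk False (neg a)) = - sig_anti \<sigma> (mk True a)"
    using MM_eq neg_S[OF a] mk_src[OF a] mk_src[OF neg_S[OF a]]
    by (simp add: sig_perm_eq sig_anti_eq neg_def)
next
  fix w assume w: "w \<in> MM \<and> psrc s w = psrc s (mk True a) \<and> sig_perm \<sigma> w = - sig_anti \<sigma> (mk True a)"
  then obtain c where c: "c \<in> Sd False" "w = mk False c" using MM_eq by auto
  have "fst c = fst a" "snd c = - snd a"
    using w mk_src[OF a] mk_src[OF c(1)] c(2) by (simp_all add: sig_perm_eq sig_anti_eq)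
  then have "c = neg a" unfolding neg_def by (simp add: prod_eq_iff)
  then show "w = mk False (neg a)" using c by simp
qed

lemma endd_props:
  assumes p: "p \<in> Sd b"
  shows "endd b p \<in> Ch" "endd b p \<notin> D"
  using pinj.endp_X[OF pinjF p] nn_facts(1)[OF p] endd_def2 by auto

lemma ST_props:
  assumes "e \<in> Ch" "e \<notin> D"
  shows "STd b e \<in> Sd b" "endd b (STd b e) = e"
  using pinj.st_props(1)[OF pinjF assms(1) pinj.notD_nonper[OF pinjF assms(2)]]
    pinj.endp_st[OF pinjF assms] by auto

lemma phi_mk:
  assumes p: "p \<in> Sd False"
  shows "ag_phi V A s t R \<sigma> \<tau> (mk False p) = mk True (STd True (endd False p))"
  unfolding ag_phi_def
proof (rule the_equality)
  let ?e = "endd False p"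
  have e: "?e \<in> Ch" "?e \<notin> D" using endd_props[OF p] by auto
  have a: "STd True ?e \<in> Sd True" "endd True (STd True ?e) = ?e" using ST_props[OF e] by auto
  show "mk True (STd True ?e) \<in> NN \<and> ptgt t (mk True (STd True ?e)) = ptgt t (mk False p) \<and>
        tau_anti \<tau> (mk True (STd True ?e)) = - tau_perm \<tau> (mk False p)"
    using NN_eq a mk_tgt[OF a(1)] mk_tgt[OF p] by (simp add: tau_anti_eq tau_perm_eq)
next
  let ?e = "endd False p"
  have e: "?e \<in> Ch" "?e \<notin> D" using endd_props[OF p] by auto
  have a: "STd True ?e \<in> Sd True" "endd True (STd True ?e) = ?e" using ST_props[OF e] by auto
  fix w assume w: "w \<in> NN \<and> ptgt t w = ptgt t (mk False p) \<and> tau_anti \<tau> w = - tau_perm \<tau> (mk False p)"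
  then obtain c where c: "c \<in> Sd True" "w = mk True c" using NN_eq by auto
  have "fst (endd True c) = fst ?e" "snd (endd True c) = snd ?e"
    using w mk_tgt[OF c(1)] mk_tgt[OF p] c(2) by (simp_all add: tau_anti_eq tau_perm_eq)
  then have "endd True c = endd True (STd True ?e)" using a by (simp add: prod_eq_iff)
  then have "c = STd True ?e" using pinj.endp_inj[OF pinjF c(1) a(1)] by simp
  then show "w = mk True (STd True ?e)" using c by simp
qed

definition "Phi' a = STd True (endd False (neg a))"

lemma Phi'_S: "a \<in> Sd True \<Longrightarrow> Phi' a \<in> Sd True"
  unfolding Phi'_def using ST_props endd_props neg_S by blast

lemma Phi_mk: "a \<in> Sd True \<Longrightarrow> ag_Phi V A s t R \<sigma> \<tau> (mk True a) = mk True (Phi' a)"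
  unfolding ag_Phi_def Phi'_def by (simp add: psi_mk phi_mk neg_S)

lemma Phi_iter: "a \<in> Sd True \<Longrightarrow> (ag_Phi V A s t R \<sigma> \<tau> ^^ n) (mk True a) = mk True ((Phi' ^^ n) a)"
proof (induction n)
  case 0 then show ?case by simp
next
  case (Suc n)
  have "(Phi' ^^ n) a \<in> Sd True" using funpow_in[of Phi' "Sd True"] Phi'_S Suc.prems by blast
  then show ?case using Suc Phi_mk by simp
qed

lemma Phi'_inj: "inj_on Phi' (Sd True)"
proof (rule inj_onI)
  fix a a' assume a: "a \<in> Sd True" "a' \<in> Sd True" "Phi' a = Phi' a'"
  have e: "endd False (neg a) \<in> Ch" "endd False (neg a) \<notin> D"
          "endd False (neg a') \<in> Ch" "endd False (neg a') \<notin> D"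
    using endd_props neg_S a by auto
  have "endd False (neg a) = endd False (neg a')"
    using ST_props(2)[OF e(1,2), of True] ST_props(2)[OF e(3,4), of True] a(3) unfolding Phi'_def by metis
  then have "neg a = neg a'" using pinj.endp_inj[OF pinjF neg_S[OF a(1)] neg_S[OF a(2)]] by simp
  then show "a = a'" unfolding neg_def by (simp add: prod_eq_iff)
qed

end


lemma orbit_mem: "x \<in> {(f ^^ n) x | n. True}" by (metis (mono_tags, lifting) funpow_0 mem_Collect_eq)

lemma orbits_finite: "finite X \<Longrightarrow> finite (orbits f X)"
proof -
  assume "finite X"
  moreover have "orbits f X = (\<lambda>x. {(f ^^ n) x | n. True}) ` X" unfolding orbits_def by auto
  ultimately show ?thesis by simp
qed

context Q begin

abbreviation "CC \<equiv> ag_C V A s t R \<sigma> \<tau>"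
abbreviation "PHI \<equiv> ag_Phi V A s t R \<sigma> \<tau>"
abbreviation "PSI \<equiv> ag_Psi V A s t R \<sigma> \<tau>"

lemma card_Ch: "card Ch = 2 * card V"
  unfolding Ch_def using finV by (simp add: card_cartesian_product)

lemma card_D: "card D = card A"
proof -
  have "inj_on (\<lambda>a. (s a, \<sigma> a)) A" by (rule inj_onI) (auto intro: out_inj)
  then show ?thesis unfolding D_def by (simp add: card_image)
qed

lemma card_S: "card (Sd b) + card A = 2 * card V"
proof -
  have "Sd b = Ch - F b ` D" by (rule pinj.starts_def[OF pinjF])
  moreover have "card (F b ` D) = card A" using card_D injF by (simp add: card_image)
  moreover have "F b ` D \<subseteq> Ch" by (rule FD)
  moreover have "card (Ch - F b ` D) = card Ch - card (F b ` D)"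
    by (rule card_Diff_subset[OF finite_subset[OF FD finCh] FD])
  moreover have "card (F b ` D) \<le> card Ch" using FD finCh by (simp add: card_mono)
  ultimately show ?thesis using card_Ch by simp
qed

lemma card_NN: "card NN = card (Sd True)"
  using NN_eq mk_inj by (simp add: card_image)

lemma fin_S: "finite (Sd b)"
proof (rule finite_subset[OF _ finCh])
  show "Sd b \<subseteq> Ch" using Sd_Ch by blast
qed
lemma fin_NN: "finite NN" using NN_eq fin_S by simp

lemma PHI_NN: "w \<in> NN \<Longrightarrow> PHI w \<in> NN"
  using NN_eq Phi_mk Phi'_S by auto

lemma conn_edges: "\<forall>x\<in>V. \<forall>y\<in>V. (x, y) \<in> (edges A s t)\<^sup>*"
  using gen unfolding gentle_def edges_def by blast

lemma V_le: "card V \<le> card A + 1"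
  by (rule conn_bound[OF finA finV]) (use endV conn_edges in auto)

fun arrs :: "('v,'a) qpath \<Rightarrow> 'a set" where
  "arrs (Triv x e) = {}" | "arrs (Arr l) = set l"

lemma fin_arrs: "finite (arrs w)" by (cases w) auto

lemma arrs_le: "card (arrs w) \<le> plen w"
  by (cases w) (auto simp: card_length)

lemma if_dir:
  assumes H: "AG_with V A s t R \<sigma> \<tau> = char_fun (p + 2) p"
  shows "card V = card A + 1"
proof -
  have H': "card {Ob \<in> orbits PHI NN. card Ob = p' \<and> (\<Sum>w\<in>Ob. plen w) = q'}
     + card {Ob \<in> orbits PSI CC. p' = 0 \<and> card Ob = q'} = char_fun (p+2) p p' q'" for p' q'
    using fun_cong[OF fun_cong[OF H, of p'], of q'] unfolding AG_with_def .
  have finOP: "finite (orbits PHI NN)" using orbits_finite fin_NN by blast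
  have finC: "finite CC" unfolding ag_C_def using finA by simp
  have finOC: "finite (orbits PSI CC)" using orbits_finite finC by blast
  have OC: "orbits PSI CC = {}"
  proof (rule ccontr)
    assume "orbits PSI CC \<noteq> {}"
    then obtain Ob where Ob: "Ob \<in> orbits PSI CC" by blast
    have "card {Ob' \<in> orbits PSI CC. (0::nat) = 0 \<and> card Ob' = card Ob} > 0"
      by (subst card_gt_0_iff) (use Ob finOC in auto)
    then show False using H'[of 0 "card Ob"] unfolding char_fun_def by simp
  qed
  have C0: "CC = {}"
  proof
    show "CC \<subseteq> {}"
    proof
      fix x assume "x \<in> CC"
      then have "{(PSI ^^ n) x | n. True} \<in> orbits PSI CC" unfolding orbits_def by blast
      then show "x \<in> {}" using OC by simp
    qed
  qed simp
  have allO: "card Ob = p + 2 \<and> (\<Sum>w\<in>Ob. plen w) = p" if Ob: "Ob \<in> orbits PHI NN" for Ob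
  proof -
    let ?S = "{Ob' \<in> orbits PHI NN. card Ob' = card Ob \<and> (\<Sum>w\<in>Ob'. plen w) = (\<Sum>w\<in>Ob. plen w)}"
    have "card ?S > 0" by (subst card_gt_0_iff) (use Ob finOP in auto)
    then have "char_fun (p+2) p (card Ob) (\<Sum>w\<in>Ob. plen w) > 0" using H'[of "card Ob" "\<Sum>w\<in>Ob. plen w"] by simp
    then show ?thesis unfolding char_fun_def by (simp split: if_splits)
  qed
  have "card {Ob \<in> orbits PHI NN. card Ob = p+2 \<and> (\<Sum>w\<in>Ob. plen w) = p} = 1"
    using H'[of "p+2" p] unfolding char_fun_def by simp
  moreover have "{Ob \<in> orbits PHI NN. card Ob = p+2 \<and> (\<Sum>w\<in>Ob. plen w) = p} = orbits PHI NN"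
    using allO by blast
  ultimately have "card (orbits PHI NN) = 1" by simp
  then obtain Oo where Oo: "orbits PHI NN = {Oo}" using card_1_singletonE by blast
  have iterNN: "(PHI ^^ n) w \<in> NN" if "w \<in> NN" for w n
    using funpow_in[of PHI NN] PHI_NN that by blast
  have NNO: "NN = Oo"
  proof
    show "NN \<subseteq> Oo"
    proof
      fix w assume "w \<in> NN"
      then have "{(PHI ^^ n) w | n. True} \<in> orbits PHI NN" unfolding orbits_def by blast
      then have "{(PHI ^^ n) w | n. True} = Oo" using Oo by simp
      then show "w \<in> Oo" using orbit_mem by metis
    qed
    show "Oo \<subseteq> NN"
    proof -
      have "Oo \<in> orbits PHI NN" using Oo by simp
      then obtain w where w: "w \<in> NN" "Oo = {(PHI ^^ n) w | n. True}" unfolding orbits_def by blast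
      then show ?thesis using iterNN by auto
    qed
  qed
  have cardNN: "card NN = p + 2" and sumNN: "(\<Sum>w\<in>NN. plen w) = p"
    using allO[of Oo] Oo NNO by auto
  have "A \<subseteq> (\<Union>w\<in>NN. arrs w)"
  proof
    fix a assume a: "a \<in> A"
    then have "a \<notin> CC" using C0 by simp
    then obtain w where w: "w \<in> NN" "\<not> (case w of Triv x e \<Rightarrow> True | Arr l \<Rightarrow> a \<notin> set l)"
      using a unfolding ag_C_def by blast
    then have "a \<in> arrs w" by (cases w) auto
    then show "a \<in> (\<Union>w\<in>NN. arrs w)" using w(1) by blast
  qed
  then have "card A \<le> card (\<Union>w\<in>NN. arrs w)"
    using fin_NN fin_arrs by (intro card_mono) simp_all
  also have "\<dots> \<le> (\<Sum>w\<in>NN. card (arrs w))" using fin_NN by (rule card_UN_le)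
  also have "\<dots> \<le> (\<Sum>w\<in>NN. plen w)" by (rule sum_mono) (rule arrs_le)
  finally have "card A \<le> p" using sumNN by simp
  moreover have "card NN + card A = 2 * card V" using card_NN card_S by simp
  ultimately show ?thesis using cardNN V_le by simp
qed

end


locale Qt = Q +
  assumes tree: "card V = card A + 1"
begin

lemma cut: "a \<in> A \<Longrightarrow> (s a, t a) \<notin> (edges (A - {a}) s t)\<^sup>*"
  by (rule tree_cut[OF finA finV _ conn_edges tree]) (use endV in auto)

lemma edge_step:
  assumes "d \<in> A" "d \<noteq> e"
  shows "(s d, t d) \<in> (edges (A - {e}) s t)\<^sup>*" "(t d, s d) \<in> (edges (A - {e}) s t)\<^sup>*"
proof -
  have "(s d, t d) \<in> edges (A - {e}) s t" "(t d, s d) \<in> edges (A - {e}) s t"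
    using assms unfolding edges_def by auto
  then show "(s d, t d) \<in> (edges (A - {e}) s t)\<^sup>*" "(t d, s d) \<in> (edges (A - {e}) s t)\<^sup>*" by auto
qed

lemma no_periodic: "\<not> pinj.periodic D (F b) c"
proof
  assume "pinj.periodic D (F b) c"
  then have ex: "\<exists>k. k > 0 \<and> (\<forall>m<k. (F b ^^ m) c \<in> D) \<and> (F b ^^ k) c = c"
    unfolding pinj.periodic_def[OF pinjF] by blast
  define k where "k = (LEAST k. k > 0 \<and> (\<forall>m<k. (F b ^^ m) c \<in> D) \<and> (F b ^^ k) c = c)"
  have k: "k > 0" "\<forall>m<k. (F b ^^ m) c \<in> D" "(F b ^^ k) c = c"
    using LeastI_ex[OF ex] unfolding k_def by auto
  have kmin: "\<And>i. 0 < i \<Longrightarrow> i < k \<Longrightarrow> (F b ^^ i) c \<noteq> c"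
  proof
    fix i assume i: "0 < i" "i < k" "(F b ^^ i) c = c"
    have "k \<le> i" unfolding k_def by (rule Least_le) (use i k(2) in auto)
    then show False using i by simp
  qed
  have cD: "c \<in> D" using k(1,2) by (metis funpow_0)
  define e where "e = arr c"
  have eA: "e \<in> A" and ec: "(s e, \<sigma> e) = c" using arr_D[OF cD] unfolding e_def by auto
  have path: "\<And>i. 0 < i \<Longrightarrow> i \<le> k \<Longrightarrow> (t e, fst ((F b ^^ i) c)) \<in> (edges (A - {e}) s t)\<^sup>*"
  proof -
    fix i :: nat assume "0 < i" "i \<le> k"
    then show "(t e, fst ((F b ^^ i) c)) \<in> (edges (A - {e}) s t)\<^sup>*"
    proof (induction i)
      case 0 then show ?case by simp
    next
      case (Suc i)
      show ?case
      proof (cases "i = 0")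
        case True then show ?thesis by (simp add: e_def)
      next
        case False
        have IH: "(t e, fst ((F b ^^ i) c)) \<in> (edges (A - {e}) s t)\<^sup>*" using Suc False by simp
        have di: "(F b ^^ i) c \<in> D" using k(2) Suc.prems by simp
        define d where "d = arr ((F b ^^ i) c)"
        have dA: "d \<in> A" and dc: "(s d, \<sigma> d) = (F b ^^ i) c" using arr_D[OF di] unfolding d_def by auto
        have "d \<noteq> e"
        proof
          assume "d = e"
          then have "(F b ^^ i) c = c" using dc ec by simp
          then show False using kmin[of i] False Suc.prems by simp
        qed
        have "fst ((F b ^^ Suc i) c) = t d" unfolding d_def by simp
        moreover have "fst ((F b ^^ i) c) = s d" using dc by (simp add: prod_eq_iff)
        ultimately show ?thesis using IH edge_step(1)[OF dA \<open>d \<noteq> e\<close>] by (metis rtrancl_trans)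
      qed
    qed
  qed
  have "(t e, s e) \<in> (edges (A - {e}) s t)\<^sup>*" using path[OF k(1) le_refl] k(3) ec by (metis fst_conv)
  then have "(s e, t e) \<in> (edges (A - {e}) s t)\<^sup>*" by (rule edges_sym_rt)
  then show False using cut[OF eA] by simp
qed

lemma ST_all:
  assumes "c \<in> Ch"
  shows "STd b c \<in> Sd b" "\<exists>k. pinj.reach D (F b) (STd b c) k c"
  using pinj.st_props[OF pinjF assms no_periodic] by auto

lemma reach_D: "pinj.reach D (F b) a k c \<longleftrightarrow> (\<forall>m<k. (F b ^^ m) a \<in> D) \<and> (F b ^^ k) a = c"
  by (rule pinj.reach_def[OF pinjF])

lemma ST_step:
  assumes "d \<in> D" shows "STd b (F b d) = STd b d"
proof -
  have dCh: "d \<in> Ch" using assms DCh by auto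
  obtain k where k: "pinj.reach D (F b) (STd b d) k d" using ST_all(2)[OF dCh] by blast
  have "pinj.reach D (F b) (STd b d) (Suc k) (F b d)"
    using k assms unfolding reach_D by (auto simp: less_Suc_eq)
  then show ?thesis using pinj.st_eq[OF pinjF ST_all(1)[OF dCh]] by blast
qed

lemma ST_start: "a \<in> Sd b \<Longrightarrow> STd b a = a"
  by (rule pinj.st_start[OF pinjF])

definition "orb a = {(Phi' ^^ n) a | n. True}"

lemma Phi'_iter_S: "a \<in> Sd True \<Longrightarrow> (Phi' ^^ n) a \<in> Sd True"
  using funpow_in[of Phi' "Sd True"] Phi'_S by blast

lemma orb_refl: "a \<in> orb a" unfolding orb_def by (metis (mono_tags, lifting) funpow_0 mem_Collect_eq)

lemma orb_trans: "b \<in> orb a \<Longrightarrow> c \<in> orb b \<Longrightarrow> c \<in> orb a"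
  unfolding orb_def by (auto simp: funpow_add[symmetric]) (metis comp_apply funpow_add)

lemma orb_Phi: "Phi' a \<in> orb a"
proof -
  have "Phi' a = (Phi' ^^ Suc 0) a" by simp
  show ?thesis unfolding orb_def by (rule CollectI, rule exI[of _ "Suc 0"]) simp
qed

lemma period: "a \<in> Sd True \<Longrightarrow> \<exists>K>0. (Phi' ^^ K) a = a"
  by (rule perm_periodic[OF fin_S Phi'_inj]) (use Phi'_S in auto)

lemma orb_sym:
  assumes a: "a \<in> Sd True" and b: "b \<in> orb a" shows "a \<in> orb b"
proof -
  obtain n where n: "b = (Phi' ^^ n) a" using b unfolding orb_def by auto
  obtain K where K: "K > 0" "(Phi' ^^ K) a = a" using period[OF a] by blast
  have Kn: "(Phi' ^^ (K * n)) a = a"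
  proof (induction n)
    case 0 then show ?case by simp
  next
    case (Suc n)
    have "(Phi' ^^ (K * Suc n)) a = (Phi' ^^ (K * n)) ((Phi' ^^ K) a)"
      by (simp only: mult_Suc_right add.commute[of K] funpow_add comp_apply)
    then show ?case using Suc K(2) by simp
  qed
  have "K * n \<ge> n" using K(1) by simp
  then have e: "K * n - n + n = K * n" by simp
  have "(Phi' ^^ (K * n - n)) b = (Phi' ^^ (K * n - n + n)) a"
    unfolding n funpow_add comp_apply ..
  also have "\<dots> = a" unfolding e by (rule Kn)
  finally have "(Phi' ^^ (K * n - n)) b = a" .
  then show ?thesis unfolding orb_def by blast
qed

end


locale Qc = Qt +
  fixes c0 assumes c0D: "c0 \<in> D"
begin

definition "e0 = arr c0"
definition "TT = {v. (s e0, v) \<in> (edges (A - {e0}) s t)\<^sup>*}"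
definition "inT c \<longleftrightarrow> fst c \<in> TT"

lemma e0: "e0 \<in> A" "(s e0, \<sigma> e0) = c0" using arr_D[OF c0D] unfolding e0_def by auto

lemma c0_in: "inT c0"
  unfolding inT_def TT_def using e0(2) by (metis fst_conv mem_Collect_eq rtrancl.rtrancl_refl)

lemma c0_out: "\<not> inT (F b c0)"
proof
  assume "inT (F b c0)"
  then have "(s e0, t e0) \<in> (edges (A - {e0}) s t)\<^sup>*" unfolding inT_def TT_def e0_def by simp
  then show False using cut[OF e0(1)] by simp
qed

lemma step_inT:
  assumes d: "d \<in> D" "d \<noteq> c0"
  shows "inT (F b d) \<longleftrightarrow> inT d"
proof -
  have dA: "arr d \<in> A" and dd: "(s (arr d), \<sigma> (arr d)) = d" using arr_D[OF d(1)] by auto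
  have ne: "arr d \<noteq> e0" using dd e0(2) d(2) by auto
  have f1: "fst d = s (arr d)" using dd by (metis fst_conv)
  have f2: "fst (F b d) = t (arr d)" by simp
  note E = edge_step[OF dA ne]
  show ?thesis unfolding inT_def TT_def f1 f2 using E rtrancl_trans by (metis mem_Collect_eq)
qed

lemma range_inT:
  assumes "i \<le> m" "\<forall>j. i \<le> j \<and> j < m \<longrightarrow> (F b ^^ j) x \<in> D \<and> (F b ^^ j) x \<noteq> c0"
  shows "inT ((F b ^^ m) x) \<longleftrightarrow> inT ((F b ^^ i) x)"
  using assms
proof (induction m)
  case 0 then show ?case by simp
next
  case (Suc m)
  show ?case
  proof (cases "i = Suc m")
    case True then show ?thesis by simp
  next
    case False
    then have im: "i \<le> m" using Suc.prems by simp
    have "(F b ^^ m) x \<in> D" "(F b ^^ m) x \<noteq> c0" using Suc.prems im by auto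
    then have "inT ((F b ^^ Suc m) x) \<longleftrightarrow> inT ((F b ^^ m) x)" using step_inT by simp
    then show ?thesis using Suc.IH[OF im] Suc.prems by simp
  qed
qed

definition "a0 = STd True c0"
definition "XX = {a \<in> Sd True. \<forall>i\<le>nnd True a. inT ((F True ^^ i) a)}"
definition "Nof0 = STd True (endd False (STd False c0))"

lemma c0Ch: "c0 \<in> Ch" using c0D DCh by auto

lemma a0S: "a0 \<in> Sd True" unfolding a0_def using ST_all(1)[OF c0Ch] .

lemma reach_uniq_same:
  assumes "x \<in> Sd b" "pinj.reach D (F b) x j c" "pinj.reach D (F b) x k c"
  shows "j = k"
  using pinj.reach_unique[OF pinjF assms(1) assms(1) assms(2,3)] by simp

lemma before_c0:
  assumes x: "x \<in> Sd b" and r: "pinj.reach D (F b) x k c0" and j: "j < k"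
  shows "(F b ^^ j) x \<in> D \<and> (F b ^^ j) x \<noteq> c0"
proof
  show "(F b ^^ j) x \<in> D" using r j unfolding reach_D by auto
  show "(F b ^^ j) x \<noteq> c0"
  proof
    assume "(F b ^^ j) x = c0"
    then have "pinj.reach D (F b) x j c0" using r j unfolding reach_D by auto
    then show False using reach_uniq_same[OF x _ r] j by auto
  qed
qed

lemma a0_facts: "inT a0" "a0 \<notin> XX"
proof -
  obtain k0 where k0: "pinj.reach D (F True) a0 k0 c0" using ST_all(2)[OF c0Ch] unfolding a0_def by blast
  have "inT ((F True ^^ k0) a0) \<longleftrightarrow> inT ((F True ^^ 0) a0)"
    by (rule range_inT) (use before_c0[OF a0S k0] in auto)
  then show ia: "inT a0" using k0 c0_in unfolding reach_D by simp
  have kn: "k0 < nnd True a0"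
  proof (rule ccontr)
    assume "\<not> k0 < nnd True a0"
    then have "nnd True a0 \<le> k0" by simp
    moreover have "(F True ^^ nnd True a0) a0 \<notin> D" using nn_facts(1)[OF a0S] .
    ultimately show False using k0 c0D unfolding reach_D by (cases "nnd True a0 = k0") auto
  qed
  have "(F True ^^ Suc k0) a0 = F True c0" using k0 unfolding reach_D by simp
  then have "\<not> inT ((F True ^^ Suc k0) a0)" using c0_out by simp
  moreover have "inT ((F True ^^ Suc k0) a0)" if "a0 \<in> XX"
  proof -
    have "\<forall>i\<le>nnd True a0. inT ((F True ^^ i) a0)" using that unfolding XX_def by simp
    moreover have "Suc k0 \<le> nnd True a0" using kn by simp
    ultimately show ?thesis by blast
  qed
  ultimately show "a0 \<notin> XX" by blast
qed

lemma step_X: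
  assumes a: "a \<in> Sd True" "inT a"
  shows "Phi' a = Nof0 \<or> Phi' a \<in> XX"
proof -
  define p where "p = neg a"
  have pS: "p \<in> Sd False" unfolding p_def using neg_S[OF a(1)] .
  have ip: "inT p" using a(2) unfolding p_def neg_def inT_def by simp
  show ?thesis
  proof (cases "\<exists>j < nnd False p. (F False ^^ j) p = c0")
    case True
    then obtain j where j: "j < nnd False p" "(F False ^^ j) p = c0" by blast
    have "pinj.reach D (F False) p j c0" unfolding reach_D using j nn_facts(2)[OF pS] by auto
    then have "STd False c0 = p" using pinj.st_eq[OF pinjF pS] by blast
    then have "Phi' a = Nof0" unfolding Phi'_def Nof0_def p_def by simp
    then show ?thesis by simp
  next
    case False
    define e where "e = endd False p"
    have ee: "e = (F False ^^ nnd False p) p" unfolding e_def by (rule endd_def2)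
    have "inT ((F False ^^ nnd False p) p) \<longleftrightarrow> inT ((F False ^^ 0) p)"
      by (rule range_inT) (use False nn_facts(2)[OF pS] in auto)
    then have ie: "inT e" using ip ee by simp
    have eCh: "e \<in> Ch" "e \<notin> D" using endd_props[OF pS] unfolding e_def by auto
    define b' where "b' = STd True e"
    have b'S: "b' \<in> Sd True" and b'e: "endd True b' = e" using ST_props[OF eCh] unfolding b'_def by auto
    have b'e2: "(F True ^^ nnd True b') b' = e" using b'e endd_def2 by simp
    have noc0: "\<forall>j<nnd True b'. (F True ^^ j) b' \<noteq> c0"
    proof (intro allI impI)
      fix j assume j: "j < nnd True b'"
      show "(F True ^^ j) b' \<noteq> c0"
      proof
        assume jc: "(F True ^^ j) b' = c0"
        have rj: "pinj.reach D (F True) b' j c0" unfolding reach_D using jc j nn_facts(2)[OF b'S] by auto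
        have "inT ((F True ^^ nnd True b') b') \<longleftrightarrow> inT ((F True ^^ Suc j) b')"
        proof (rule range_inT)
          show "Suc j \<le> nnd True b'" using j by simp
          show "\<forall>j'. Suc j \<le> j' \<and> j' < nnd True b' \<longrightarrow> (F True ^^ j') b' \<in> D \<and> (F True ^^ j') b' \<noteq> c0"
          proof (intro allI impI conjI)
            fix j' assume j': "Suc j \<le> j' \<and> j' < nnd True b'"
            show "(F True ^^ j') b' \<in> D" using nn_facts(2)[OF b'S] j' by simp
            show "(F True ^^ j') b' \<noteq> c0"
            proof
              assume "(F True ^^ j') b' = c0"
              then have "pinj.reach D (F True) b' j' c0" unfolding reach_D using j' nn_facts(2)[OF b'S] by auto
              then show False using reach_uniq_same[OF b'S rj] j' by simp
            qed
          qed
        qed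
        moreover have "(F True ^^ Suc j) b' = F True c0" using jc by simp
        ultimately show False using c0_out ie b'e2 by simp
      qed
    qed
    have "b' \<in> XX"
      unfolding XX_def
    proof (intro CollectI conjI allI impI)
      show "b' \<in> Sd True" by (rule b'S)
      fix i assume i: "i \<le> nnd True b'"
      have "inT ((F True ^^ nnd True b') b') \<longleftrightarrow> inT ((F True ^^ i) b')"
        by (rule range_inT) (use i noc0 nn_facts(2)[OF b'S] in auto)
      then show "inT ((F True ^^ i) b')" using ie b'e2 by simp
    qed
    moreover have "Phi' a = b'" unfolding Phi'_def b'_def e_def p_def ..
    ultimately show ?thesis by simp
  qed
qed

lemma X_inT: "a \<in> XX \<Longrightarrow> inT a" unfolding XX_def by (metis (no_types, lifting) funpow_0 le0 mem_Collect_eq)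
lemma X_S: "a \<in> XX \<Longrightarrow> a \<in> Sd True" unfolding XX_def by simp

lemma Nof0_orb: "Nof0 \<in> orb a0"
proof (rule ccontr)
  assume nin: "Nof0 \<notin> orb a0"
  have ne: "(Phi' ^^ n) a0 \<noteq> Nof0" for n
  proof
    assume "(Phi' ^^ n) a0 = Nof0"
    then have "Nof0 \<in> orb a0" unfolding orb_def by (intro CollectI exI[of _ n]) simp
    then show False using nin by simp
  qed
  have allX: "(Phi' ^^ Suc n) a0 \<in> XX" for n
  proof (induction n)
    case 0
    have "Phi' a0 \<in> XX" using step_X[OF a0S a0_facts(1)] ne[of 1] by simp
    then show ?case by simp
  next
    case (Suc n)
    have "Phi' ((Phi' ^^ Suc n) a0) \<in> XX"
      using step_X[OF X_S[OF Suc.IH] X_inT[OF Suc.IH]] ne[of "Suc (Suc n)"] by simp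
    then show ?case by simp
  qed
  obtain K where K: "K > 0" "(Phi' ^^ K) a0 = a0" using period[OF a0S] by blast
  then obtain K' where "K = Suc K'" by (cases K) auto
  then have "a0 \<in> XX" using allX[of K'] K(2) by simp
  then show False using a0_facts(2) by simp
qed

end

context Qt begin

lemma cut_link:
  assumes "c \<in> D"
  shows "STd True (endd False (STd False c)) \<in> orb (STd True c)"
proof -
  interpret Qc V A s t R \<sigma> \<tau> c by unfold_locales (rule assms)
  show ?thesis using Nof0_orb unfolding Nof0_def a0_def .
qed

end


context Qt begin

abbreviation "Aa c \<equiv> STd True c"
abbreviation "Pp c \<equiv> STd False c"
abbreviation "Nof p \<equiv> STd True (endd False p)"

lemma Aa_S: "c \<in> Ch \<Longrightarrow> Aa c \<in> Sd True" using ST_all(1) by blast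

lemma Nof_S: "p \<in> Sd False \<Longrightarrow> Nof p \<in> Sd True" using ST_props(1) endd_props by blast

lemma Pp_S: "c \<in> Ch \<Longrightarrow> Pp c \<in> Sd False" using ST_all(1) by blast

lemma L_out:
  assumes c: "c \<in> Ch" shows "Nof (Pp c) \<in> orb (Aa c)"
proof (cases "c \<in> D")
  case True then show ?thesis by (rule cut_link)
next
  case False
  have "endd False (Pp c) = c" using ST_props(2)[OF c False] .
  then show ?thesis using orb_refl by simp
qed

lemma neg_Ch: "c \<in> Ch \<Longrightarrow> neg c \<in> Ch" unfolding neg_def Ch_def by auto

lemma orb_S:
  assumes "a \<in> Sd True" "b \<in> orb a" shows "b \<in> Sd True"
proof -
  obtain n where "b = (Phi' ^^ n) a" using assms(2) unfolding orb_def by blast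
  then show ?thesis using Phi'_iter_S[OF assms(1)] by simp
qed

lemma L_in:
  assumes c: "c \<in> Ch" shows "Aa (neg c) \<in> orb (Aa c)"
proof (cases "c \<in> Sd True")
  case True
  have Ac: "Aa c = c" using ST_start[OF True] .
  have nS: "neg c \<in> Sd False" using neg_S[OF True] .
  have Pn: "Pp (neg c) = neg c" using ST_start[OF nS] .
  have "Phi' c = Nof (Pp (neg c))" unfolding Phi'_def Pn ..
  have o1: "Nof (Pp (neg c)) \<in> orb (Aa (neg c))" using L_out[OF neg_Ch[OF c]] .
  have "Aa (neg c) \<in> orb (Nof (Pp (neg c)))" by (rule orb_sym[OF Aa_S[OF neg_Ch[OF c]] o1])
  then have "Aa (neg c) \<in> orb (Phi' c)" using \<open>Phi' c = _\<close> by simp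
  then show ?thesis using orb_trans[OF orb_Phi] Ac by simp
next
  case False
  then have "c \<in> F True ` D" using c pinj.starts_def[OF pinjF] by blast
  then obtain d where d: "d \<in> D" "c = F True d" by blast
  have Ac: "Aa c = Aa d" using ST_step[OF d(1)] d(2) by simp
  have "neg c = F False d" using d(2) unfolding neg_def F_def by simp
  then have Pn: "Pp (neg c) = Pp d" using ST_step[OF d(1)] by simp
  have dCh: "d \<in> Ch" using d(1) DCh by auto
  have o1: "Nof (Pp d) \<in> orb (Aa d)" using L_out[OF dCh] .
  have o2: "Nof (Pp (neg c)) \<in> orb (Aa (neg c))" using L_out[OF neg_Ch[OF c]] .
  have "Aa (neg c) \<in> orb (Nof (Pp (neg c)))" by (rule orb_sym[OF Aa_S[OF neg_Ch[OF c]] o2])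
  then have "Aa (neg c) \<in> orb (Nof (Pp d))" using Pn by simp
  then show ?thesis using orb_trans[OF o1] Ac by simp
qed

definition "cls x = Aa (x, 1)"

lemma cls_S: "x \<in> V \<Longrightarrow> cls x \<in> Sd True" unfolding cls_def by (rule Aa_S) (simp add: Ch_def)

lemma Aa_cls:
  assumes c: "c \<in> Ch" shows "Aa c \<in> orb (cls (fst c))" "cls (fst c) \<in> orb (Aa c)"
proof -
  obtain x e where xe: "c = (x, e)" "x \<in> V" "e = 1 \<or> e = -1" using c unfolding Ch_def by auto
  have "Aa c \<in> orb (cls (fst c))"
  proof (cases "e = 1")
    case True then show ?thesis using xe orb_refl unfolding cls_def by simp
  next
    case False
    then have "e = -1" using xe by simp
    have "(x, 1) \<in> Ch" using xe unfolding Ch_def by simp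
    from L_in[OF this] show ?thesis using xe \<open>e = -1\<close> unfolding cls_def neg_def by simp
  qed
  then show "Aa c \<in> orb (cls (fst c))" "cls (fst c) \<in> orb (Aa c)"
    using orb_sym[OF cls_S] xe by auto
qed

lemma arrow_link:
  assumes a: "a \<in> A" shows "cls (t a) \<in> orb (cls (s a))" "cls (s a) \<in> orb (cls (t a))"
proof -
  have D1: "(s a, \<sigma> a) \<in> D" unfolding D_def using a by blast
  have eq: "Aa (s a, \<sigma> a) = Aa (t a, \<tau> a)" using ST_step[OF D1, of True] a by simp
  have c1: "(s a, \<sigma> a) \<in> Ch" and c2: "(t a, \<tau> a) \<in> Ch"
    using endV[OF a] sg[OF a] tg[OF a] unfolding Ch_def by auto
  show "cls (t a) \<in> orb (cls (s a))"
    using orb_trans[OF Aa_cls(1)[OF c1]] Aa_cls(2)[OF c2] eq by simp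
  show "cls (s a) \<in> orb (cls (t a))"
    using orb_trans[OF Aa_cls(1)[OF c2]] Aa_cls(2)[OF c1] eq by simp
qed

lemma V_ne: "V \<noteq> {}" using gen unfolding gentle_def by auto

lemma single_orbit:
  assumes a1: "a1 \<in> Sd True" shows "orb a1 = Sd True"
proof -
  obtain x0 where x0: "x0 \<in> V" using V_ne by blast
  have conn: "cls y \<in> orb (cls x0)" if "(x0, y) \<in> (edges A s t)\<^sup>*" for y
    using that
  proof (induction rule: rtrancl_induct)
    case base then show ?case by (rule orb_refl)
  next
    case (step y z)
    then obtain b where b: "b \<in> A" "(y = s b \<and> z = t b) \<or> (y = t b \<and> z = s b)"
      unfolding edges_def by auto
    then have "cls z \<in> orb (cls y)" using arrow_link[OF b(1)] by auto
    then show ?case using orb_trans[OF step.IH] by simp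
  qed
  have all: "b \<in> orb (cls x0)" if b: "b \<in> Sd True" for b
  proof -
    have bCh: "b \<in> Ch" using Sd_Ch[OF b] .
    then have "fst b \<in> V" unfolding Ch_def by auto
    then have "cls (fst b) \<in> orb (cls x0)" using conn conn_edges x0 by blast
    moreover have "Aa b \<in> orb (cls (fst b))" using Aa_cls(1)[OF bCh] .
    moreover have "Aa b = b" using ST_start[OF b] .
    ultimately show ?thesis using orb_trans by metis
  qed
  show ?thesis
  proof
    show "orb a1 \<subseteq> Sd True" using orb_S[OF a1] by blast
    show "Sd True \<subseteq> orb a1"
    proof
      fix b assume b: "b \<in> Sd True"
      have "cls x0 \<in> orb a1" using orb_sym[OF cls_S[OF x0] all[OF a1]] .
      then show "b \<in> orb a1" using orb_trans all[OF b] by blast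
    qed
  qed
qed

lemma reach_lt_nn:
  assumes a: "a \<in> Sd b" and r: "pinj.reach D (F b) a k c" and cD: "c \<in> D"
  shows "k < nnd b a"
proof (rule ccontr)
  assume "\<not> k < nnd b a"
  then have "nnd b a \<le> k" by simp
  moreover have "(F b ^^ nnd b a) a \<notin> D" using nn_facts(1)[OF a] .
  ultimately show False using r cD unfolding reach_D by (cases "nnd b a = k") auto
qed

lemma C_empty: "CC = {}"
proof -
  have "a \<notin> CC" if a: "a \<in> A" for a
  proof -
    define c where "c = (s a, \<sigma> a)"
    have cD: "c \<in> D" unfolding c_def D_def using a by blast
    have cCh: "c \<in> Ch" using cD DCh by auto
    obtain k where k: "pinj.reach D (F True) (Aa c) k c" using ST_all(2)[OF cCh] by blast
    have S: "Aa c \<in> Sd True" using Aa_S[OF cCh] .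
    have kn: "k < nnd True (Aa c)" using reach_lt_nn[OF S k cD] .
    then have n0: "nnd True (Aa c) \<noteq> 0" by simp
    have "arr ((F True ^^ k) (Aa c)) = a" using k a unfolding reach_D c_def by simp
    then have "a \<in> set (rev (map (\<lambda>i. arr ((F True ^^ i) (Aa c))) [0..<nnd True (Aa c)]))"
      using kn by force
    moreover have "mk True (Aa c) \<in> NN" using NN_eq S by simp
    ultimately show "a \<notin> CC" unfolding ag_C_def using mk_Arr[OF S n0] by fastforce
  qed
  moreover have "CC \<subseteq> A" unfolding ag_C_def by auto
  ultimately show ?thesis by blast
qed

lemma sum_nn: "(\<Sum>a\<in>Sd True. nnd True a) = card A"
proof -
  define Sg where "Sg = (SIGMA a:Sd True. {..<nnd True a})"
  have cS: "card Sg = (\<Sum>a\<in>Sd True. nnd True a)" unfolding Sg_def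
    using fin_S by (simp add: card_SigmaI)
  have bij: "bij_betw (\<lambda>(a,i). (F True ^^ i) a) Sg D"
  proof (rule bij_betw_imageI)
    show "inj_on (\<lambda>(a,i). (F True ^^ i) a) Sg"
    proof (rule inj_onI)
      fix x y assume x: "x \<in> Sg" and y: "y \<in> Sg" and e: "(\<lambda>(a,i). (F True ^^ i) a) x = (\<lambda>(a,i). (F True ^^ i) a) y"
      obtain a i where ai: "x = (a,i)" "a \<in> Sd True" "i < nnd True a" using x unfolding Sg_def by auto
      obtain a' i' where ai': "y = (a',i')" "a' \<in> Sd True" "i' < nnd True a'" using y unfolding Sg_def by auto
      have "pinj.reach D (F True) a i ((F True ^^ i) a)" unfolding reach_D using ai nn_facts(2)[OF ai(2)] by auto
      moreover have "pinj.reach D (F True) a' i' ((F True ^^ i) a)" unfolding reach_D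
        using ai' nn_facts(2)[OF ai'(2)] e ai by auto
      ultimately have "a = a' \<and> i = i'" using pinj.reach_unique[OF pinjF ai(2) ai'(2)] by blast
      then show "x = y" using ai ai' by simp
    qed
    show "(\<lambda>(a,i). (F True ^^ i) a) ` Sg = D"
    proof
      show "(\<lambda>(a,i). (F True ^^ i) a) ` Sg \<subseteq> D"
        unfolding Sg_def using nn_facts(2) by auto
      show "D \<subseteq> (\<lambda>(a,i). (F True ^^ i) a) ` Sg"
      proof
        fix d assume d: "d \<in> D"
        have dCh: "d \<in> Ch" using d DCh by auto
        obtain k where k: "pinj.reach D (F True) (Aa d) k d" using ST_all(2)[OF dCh] by blast
        have S: "Aa d \<in> Sd True" using Aa_S[OF dCh] .
        have "k < nnd True (Aa d)" using reach_lt_nn[OF S k d] .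
        then have "(Aa d, k) \<in> Sg" unfolding Sg_def using S by simp
        moreover have "d = (F True ^^ k) (Aa d)" using k unfolding reach_D by simp
        ultimately show "d \<in> (\<lambda>(a,i). (F True ^^ i) a) ` Sg" by force
      qed
    qed
  qed
  have "card Sg = card D" using bij_betw_same_card[OF bij] .
  then show ?thesis using cS card_D by simp
qed

lemma sum_plen: "(\<Sum>w\<in>NN. plen w) = card A"
proof -
  have "(\<Sum>w\<in>NN. plen w) = (\<Sum>a\<in>Sd True. plen (mk True a))"
    unfolding NN_eq by (rule sum.reindex[OF mk_inj, unfolded comp_def])
  also have "\<dots> = (\<Sum>a\<in>Sd True. nnd True a)" by (simp add: plen_mk)
  finally show ?thesis using sum_nn by simp
qed

lemma orbits_NN: "orbits PHI NN = {NN}"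
proof -
  have S_ne: "Sd True \<noteq> {}"
  proof
    assume "Sd True = {}"
    then have "card (Sd True) = 0" by simp
    then show False using card_S[of True] tree by simp
  qed
  have orbw: "{(PHI ^^ n) w | n. True} = NN" if w: "w \<in> NN" for w
  proof -
    obtain a where a: "a \<in> Sd True" "w = mk True a" using w NN_eq by auto
    have "{(PHI ^^ n) w | n. True} = mk True ` orb a"
      unfolding orb_def a(2) using Phi_iter[OF a(1)] by auto
    then show ?thesis using single_orbit[OF a(1)] NN_eq by simp
  qed
  have "NN \<noteq> {}" using S_ne NN_eq by simp
  then show ?thesis unfolding orbits_def using orbw by blast
qed

lemma only_if: "AG_with V A s t R \<sigma> \<tau> = char_fun (card A + 2) (card A)"
proof (intro ext)
  fix p q
  have cNN: "card NN = card A + 2" using card_NN card_S[of True] tree by simp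
  have "orbits PSI CC = {}" using C_empty unfolding orbits_def by simp
  then have "AG_with V A s t R \<sigma> \<tau> p q = card {Ob \<in> {NN}. card Ob = p \<and> (\<Sum>w\<in>Ob. plen w) = q}"
    unfolding AG_with_def orbits_NN by simp
  also have "{Ob \<in> {NN}. card Ob = p \<and> (\<Sum>w\<in>Ob. plen w) = q} =
     (if card NN = p \<and> (\<Sum>w\<in>NN. plen w) = q then {NN} else {})" by auto
  also have "card \<dots> = char_fun (card A + 2) (card A) p q"
    unfolding char_fun_def using cNN sum_plen by auto
  finally show "AG_with V A s t R \<sigma> \<tau> p q = char_fun (card A + 2) (card A) p q" .
qed

end


theorem proposition3p4:
  fixes V :: "'v set" and A :: "'a set" and s t :: "'a \<Rightarrow> 'v" and R :: "('a \<times> 'a) set"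
  assumes "gentle V A s t R"
  shows "card V = card A + 1 \<longleftrightarrow>
         (\<exists>p::nat. AG_invariant V A s t R = char_fun (p + 2) p)"
proof -
  define st where "st = (SOME st. valid_signs A s t R (fst st) (snd st))"
  have ex: "\<exists>st. valid_signs A s t R (fst st) (snd st)"
    using signs_exist[OF assms] by auto
  have v: "valid_signs A s t R (fst st) (snd st)" unfolding st_def by (rule someI_ex[OF ex])
  interpret Q V A s t R "fst st" "snd st" using assms v by unfold_locales
  have inv: "AG_invariant V A s t R = AG_with V A s t R (fst st) (snd st)"
    unfolding AG_invariant_def st_def Let_def ..
  show ?thesis
  proof
    assume tr: "card V = card A + 1"
    interpret Qt V A s t R "fst st" "snd st" using tr by unfold_locales
    show "\<exists>p::nat. AG_invariant V A s t R = char_fun (p + 2) p"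
      using only_if inv by (intro exI[of _ "card A"]) simp
  next
    assume "\<exists>p::nat. AG_invariant V A s t R = char_fun (p + 2) p"
    then obtain p where "AG_with V A s t R (fst st) (snd st) = char_fun (p + 2) p" using inv by auto
    then show "card V = card A + 1" by (rule if_dir)
  qed
qed


end
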